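(* Let $p\ge0$, $\Omega>0$, and $S^{(1)},S^{(2)}\in\mathcal B_\Omega$ with $S^{(l)}=\{\lambda^{(l)}_n,\alpha^{(l)}_n\}$. Let $\delta_n=|\rho_n^{(1)}-\rho_n^{(2)}|+|\alpha_n^{(1)}-\alpha_n^{(2)}|$ and $Z=(\sum_{n\ge1}\delta_n^2)^{1/2}$. Then for all $n\ge1$ and $x\in[0,\pi]$, with $C$ depending only on $p,\Omega$: (1) $|\tilde\varphi^{(1)}_{n0}(x)-\tilde\varphi^{(2)}_{n0}(x)|\le C\delta_n$; (2) $|\tilde\psi^{(1)}_{n0}(x)-\tilde\psi^{(2)}_{n0}(x)|\le C\delta_n$; (3) $\|\tilde H^{(1)}(x)-\tilde H^{(2)}(x)\|_{m\to m}\le CZ$. Here objects with superscript $(l)$ are constructed from $S^{(l)}$.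
   Context: $\mathcal S_p$: collections $S=\{\lambda_n,\alpha_n\}_{n\ge1}$ of complex numbers with $\rho_n:=\sqrt{\lambda_n}$ ($\arg\rho_n\in[-\pi/2,\pi/2)$), $\rho_n=n-p-1+\varkappa_n$, $\alpha_n=2/\pi+\kappa_n$, $\{\varkappa_n\},\{\kappa_n\}\in l_2$. Model data: $\tilde\rho_n=0$ for $n\le p+1$, $\tilde\rho_n=n-p-1$ for $n\ge p+1$, $\tilde\lambda_n=\tilde\rho_n^2$; $\tilde\alpha_1=1/\pi$, $\tilde\alpha_n=0$ for $2\le n\le p+1$, $\tilde\alpha_n=2/\pi$ for $n\ge p+2$. $\xi_n=|\rho_n-\tilde\rho_n|+|\alpha_n-\tilde\alpha_n|$, $\mathcal B_\Omega=\{S\in\mathcal S_p:(\sum\xi_n^2)^{1/2}\le\Omega\}$. For a given $S$: $\lambda_{n0}=\lambda_n,\rho_{n0}=\rho_n,\alpha_{n0}=\alpha_n$, $\lambda_{n1}=\tilde\lambda_n,\rho_{n1}=\tilde\rho_n,\alpha_{n1}=\tilde\alpha_n$, $\hat\rho_n=\rho_n-\tilde\rho_n$; $\tilde\varphi_{ni}(x)=\cos(\rho_{ni}x)$; $\tilde D(x,\lambda,\mu)=\int_0^x\cos(\sqrt\lambda t)\cos(\sqrt\mu t)dt$; $\tilde Q_{ni,kj}(x)=\alpha_{kj}\tilde D(x,\rho_{ni}^2,\rho_{kj}^2)$; $\tilde Q_{nk}=\begin{pmatrix}\tilde Q_{n0,k0}&-\tilde Q_{n0,k1}\\ \tilde Q_{n1,k0}&-\tilde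 Q_{n1,k1}\end{pmatrix}$; $T_k^{-1}=\begin{pmatrix}\hat\rho_k&1\\0&1\end{pmatrix}$; for $\hat\rho_n\neq0$, $T_n=\begin{pmatrix}\hat\rho_n^{-1}&-\hat\rho_n^{-1}\\0&1\end{pmatrix}$. $\tilde\psi_n=(\tilde\psi_{n0},\tilde\psi_{n1})^T=T_n(\tilde\varphi_{n0},\tilde\varphi_{n1})^T$ if $\hat\rho_n\ne0$, and $(-x\sin(\rho_{n1}x),\cos(\rho_{n1}x))^T$ if $\hat\rho_n=0$. $\tilde H_{nk}=T_n\tilde Q_{nk}T_k^{-1}$ if $\hat\rho_n\neq0$; $\tilde H_{nk}=\begin{pmatrix}\partial_\rho[\alpha_{k0}\tilde D(x,\rho^2,\lambda_{k0})]_{\rho=\rho_{n0}}&-\partial_\rho[\alpha_{k1}\tilde D(x,\rho^2,\lambda_{k1})]_{\rho=\rho_{n0}}\\ \tilde Q_{n1,k0}&-\tilde Q_{n1,k1}\end{pmatrix}T_k^{-1}$ if $\hat\rho_n=0$. $m$: Banach space of bounded sequences $(a_{ni})_{n\ge1,i=0,1}$ with sup norm; $(\tilde H(x)a)_n=\sum_k\tilde H_{nk}(x)a_k$. *)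

theory Defs
  imports "HOL-Analysis.Analysis"
begin

text \<open>A data collection S = {lambda_n, alpha_n} is a pair of sequences indexed by n (only n >= 1 is used).\<close>
type_synonym sdata = "(nat \<Rightarrow> complex) \<times> (nat \<Rightarrow> complex)"

text \<open>Square root branch with arg in [-pi/2, pi/2).\<close>
definition sqrtb :: "complex \<Rightarrow> complex" where
  "sqrtb z = (if Re (csqrt z) = 0 \<and> Im (csqrt z) > 0 then - csqrt z else csqrt z)"

definition lam :: "sdata \<Rightarrow> nat \<Rightarrow> complex" where "lam S n = fst S n"
definition alph :: "sdata \<Rightarrow> nat \<Rightarrow> complex" where "alph S n = snd S n"
definition rho :: "sdata \<Rightarrow> nat \<Rightarrow> complex" where "rho S n = sqrtb (lam S n)"

definition rhoT :: "nat \<Rightarrow> nat \<Rightarrow> complex" where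
  "rhoT p n = (if n \<le> p + 1 then 0 else of_nat (n - p - 1))"
definition lamT :: "nat \<Rightarrow> nat \<Rightarrow> complex" where
  "lamT p n = (rhoT p n)\<^sup>2"
definition alphT :: "nat \<Rightarrow> nat \<Rightarrow> complex" where
  "alphT p n = (if n = 1 then 1 / of_real pi else if n \<le> p + 1 then 0 else 2 / of_real pi)"

definition in_Sp :: "nat \<Rightarrow> sdata \<Rightarrow> bool" where
  "in_Sp p S \<longleftrightarrow>
     summable (\<lambda>n. (cmod (rho S (Suc n) - (of_int (int (Suc n) - int p - 1))))\<^sup>2) \<and>
     summable (\<lambda>n. (cmod (alph S (Suc n) - 2 / of_real pi))\<^sup>2)"

definition xi :: "nat \<Rightarrow> sdata \<Rightarrow> nat \<Rightarrow> real" where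
  "xi p S n = cmod (rho S n - rhoT p n) + cmod (alph S n - alphT p n)"

definition inBall :: "nat \<Rightarrow> real \<Rightarrow> sdata \<Rightarrow> bool" where
  "inBall p \<Omega> S \<longleftrightarrow> in_Sp p S \<and> summable (\<lambda>n. (xi p S (Suc n))\<^sup>2) \<and>
     sqrt (\<Sum>n. (xi p S (Suc n))\<^sup>2) \<le> \<Omega>"

definition lam_i :: "nat \<Rightarrow> sdata \<Rightarrow> nat \<Rightarrow> nat \<Rightarrow> complex" where
  "lam_i p S n i = (if i = 0 then lam S n else lamT p n)"
definition rho_i :: "nat \<Rightarrow> sdata \<Rightarrow> nat \<Rightarrow> nat \<Rightarrow> complex" where
  "rho_i p S n i = (if i = 0 then rho S n else rhoT p n)"
definition alph_i :: "nat \<Rightarrow> sdata \<Rightarrow> nat \<Rightarrow> nat \<Rightarrow> complex" where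
  "alph_i p S n i = (if i = 0 then alph S n else alphT p n)"
definition rhohat :: "nat \<Rightarrow> sdata \<Rightarrow> nat \<Rightarrow> complex" where
  "rhohat p S n = rho S n - rhoT p n"

text \<open>2x2 matrices as functions on indices {0,1}.\<close>
definition mat2 :: "'a \<Rightarrow> 'a \<Rightarrow> 'a \<Rightarrow> 'a \<Rightarrow> nat \<Rightarrow> nat \<Rightarrow> 'a" where
  "mat2 a b c d = (\<lambda>i j. if i = 0 then (if j = 0 then a else b) else (if j = 0 then c else d))"
definition mmult2 :: "(nat \<Rightarrow> nat \<Rightarrow> complex) \<Rightarrow> (nat \<Rightarrow> nat \<Rightarrow> complex) \<Rightarrow> nat \<Rightarrow> nat \<Rightarrow> complex" where
  "mmult2 A B = (\<lambda>i j. \<Sum>l<2. A i l * B l j)"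
definition mvmult2 :: "(nat \<Rightarrow> nat \<Rightarrow> complex) \<Rightarrow> (nat \<Rightarrow> complex) \<Rightarrow> nat \<Rightarrow> complex" where
  "mvmult2 A v = (\<lambda>i. \<Sum>l<2. A i l * v l)"

definition tD :: "real \<Rightarrow> complex \<Rightarrow> complex \<Rightarrow> complex" where
  "tD x l m = integral {0..x} (\<lambda>t. cos (csqrt l * of_real t) * cos (csqrt m * of_real t))"

definition phiT :: "nat \<Rightarrow> sdata \<Rightarrow> nat \<Rightarrow> nat \<Rightarrow> real \<Rightarrow> complex" where
  "phiT p S n i x = cos (rho_i p S n i * of_real x)"

definition Tinv :: "nat \<Rightarrow> sdata \<Rightarrow> nat \<Rightarrow> nat \<Rightarrow> nat \<Rightarrow> complex" where
  "Tinv p S k = mat2 (rhohat p S k) 1 0 1"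
definition Tm :: "nat \<Rightarrow> sdata \<Rightarrow> nat \<Rightarrow> nat \<Rightarrow> nat \<Rightarrow> complex" where
  "Tm p S n = mat2 (1 / rhohat p S n) (- 1 / rhohat p S n) 0 1"

definition psiT :: "nat \<Rightarrow> sdata \<Rightarrow> nat \<Rightarrow> nat \<Rightarrow> real \<Rightarrow> complex" where
  "psiT p S n i x =
     (if rhohat p S n \<noteq> 0 then mvmult2 (Tm p S n) (\<lambda>j. phiT p S n j x) i
      else (if i = 0 then - of_real x * sin (rho_i p S n 1 * of_real x)
            else cos (rho_i p S n 1 * of_real x)))"

definition Qt :: "nat \<Rightarrow> sdata \<Rightarrow> real \<Rightarrow> nat \<Rightarrow> nat \<Rightarrow> nat \<Rightarrow> nat \<Rightarrow> complex" where
  "Qt p S x n i k j = alph_i p S k j * tD x ((rho_i p S n i)\<^sup>2) ((rho_i p S k j)\<^sup>2)"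

definition Qm :: "nat \<Rightarrow> sdata \<Rightarrow> real \<Rightarrow> nat \<Rightarrow> nat \<Rightarrow> nat \<Rightarrow> nat \<Rightarrow> complex" where
  "Qm p S x n k = mat2 (Qt p S x n 0 k 0) (- Qt p S x n 0 k 1) (Qt p S x n 1 k 0) (- Qt p S x n 1 k 1)"

definition Hm :: "nat \<Rightarrow> sdata \<Rightarrow> real \<Rightarrow> nat \<Rightarrow> nat \<Rightarrow> nat \<Rightarrow> nat \<Rightarrow> complex" where
  "Hm p S x n k =
     (if rhohat p S n \<noteq> 0 then mmult2 (mmult2 (Tm p S n) (Qm p S x n k)) (Tinv p S k)
      else mmult2
        (mat2 (deriv (\<lambda>r. alph_i p S k 0 * tD x (r\<^sup>2) (lam_i p S k 0)) (rho_i p S n 0))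
              (- deriv (\<lambda>r. alph_i p S k 1 * tD x (r\<^sup>2) (lam_i p S k 1)) (rho_i p S n 0))
              (Qt p S x n 1 k 0) (- Qt p S x n 1 k 1))
        (Tinv p S k))"

definition delta :: "sdata \<Rightarrow> sdata \<Rightarrow> nat \<Rightarrow> real" where
  "delta S1 S2 n = cmod (rho S1 n - rho S2 n) + cmod (alph S1 n - alph S2 n)"

definition Zd :: "sdata \<Rightarrow> sdata \<Rightarrow> real" where
  "Zd S1 S2 = sqrt (\<Sum>n. (delta S1 S2 (Suc n))\<^sup>2)"

end

theory Submission
  imports Defs "HOL-Complex_Analysis.Complex_Analysis"
begin
definition SS :: "real \<Rightarrow> complex \<Rightarrow> complex" where
  "SS x u = (if u = 0 then of_real x else sin (u * of_real x) / u)"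

lemma SS_holo: "SS x holomorphic_on UNIV"
proof -
  have h: "(\<lambda>u. sin (u * of_real x)) holomorphic_on UNIV"
    by (intro holomorphic_intros)
  have d: "deriv (\<lambda>u. sin (u * of_real x)) 0 = of_real x"
  proof -
    have "((\<lambda>u. sin (u * of_real x)) has_field_derivative cos (0 * of_real x) * (1 * of_real x)) (at 0)"
      by (auto intro!: derivative_eq_intros)
    then show ?thesis using DERIV_imp_deriv by fastforce
  qed
  have "(\<lambda>z. if z = 0 then deriv (\<lambda>u. sin (u * of_real x)) 0
                else ((\<lambda>u. sin (u * of_real x)) z - (\<lambda>u. sin (u * of_real x)) 0) / (z-0)) holomorphic_on UNIV"
    using pole_lemma_open[OF h] by simp
  moreover have "(\<lambda>z. if z = 0 then deriv (\<lambda>u. sin (u * of_real x)) 0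
                else ((\<lambda>u. sin (u * of_real x)) z - (\<lambda>u. sin (u * of_real x)) 0) / (z-0)) = SS x"
    using d by (auto simp: SS_def fun_eq_iff)
  ultimately show ?thesis by simp
qed

lemma SS_integral:
  assumes "x \<ge> 0"
  shows "((\<lambda>t. cos (a * of_real t)) has_integral SS x a) {0..x}"
proof (cases "a = 0")
  case True
  then show ?thesis using has_integral_const_real[of "1::complex" 0 x] assms
    by (simp add: SS_def scaleR_conv_of_real)
next
  case False
  have "((\<lambda>t. cos (a * of_real t)) has_integral (sin (a * of_real x) / a - sin (a * of_real 0) / a)) {0..x}"
  proof (rule fundamental_theorem_of_calculus[OF assms])
    fix t assume "t \<in> {0..x}"
    have "((\<lambda>z. sin (a * z) / a) has_field_derivative cos (a * of_real t)) (at (of_real t))"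
      using False by (auto intro!: derivative_eq_intros)
    then show "((\<lambda>t. sin (a * of_real t) / a) has_vector_derivative cos (a * of_real t)) (at t within {0..x})"
      by (rule has_vector_derivative_real_field)
  qed
  then show ?thesis using False by (simp add: SS_def)
qed

definition EE :: "real \<Rightarrow> complex \<Rightarrow> complex \<Rightarrow> complex" where
  "EE x z w = (SS x (z - w) + SS x (z + w)) / 2"

lemma cos_csqrt_sq: "cos (csqrt (z^2) * t) = cos (z * t)"
proof -
  have "csqrt (z^2) = z \<or> csqrt (z^2) = - z"
    using power2_eq_iff[of "csqrt (z^2)" z] by (simp add: power2_csqrt)
  then show ?thesis by auto
qed

lemma tD_EE:
  assumes "x \<ge> 0"
  shows "tD x (z^2) (w^2) = EE x z w"
proof -
  have e: "cos (csqrt (z^2) * of_real t) * cos (csqrt (w^2) * of_real t)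
      = (cos ((z - w) * of_real t) + cos ((z + w) * of_real t)) / 2" for t
    by (simp only: cos_csqrt_sq cos_times_cos) (simp add: algebra_simps)
  have "((\<lambda>t. (cos ((z - w) * of_real t) + cos ((z + w) * of_real t)) / 2) has_integral
        (SS x (z - w) + SS x (z + w)) / 2) {0..x}"
    by (intro has_integral_divide has_integral_add SS_integral assms)
  then show ?thesis unfolding tD_def EE_def e by (rule integral_unique)
qed

lemma cmod_sin_le: "cmod (sin z) \<le> exp \<bar>Im z\<bar>"
  using cmod_sin_le_exp[of 1 z] by simp
lemma cmod_cos_le: "cmod (cos z) \<le> exp \<bar>Im z\<bar>"
  using cmod_cos_le_exp[of 1 z] by simp

lemma SS_bound0:
  assumes "0 \<le> x" "x \<le> pi" "\<bar>Im u\<bar> \<le> L"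
  shows "cmod (SS x u) \<le> x * exp (L * pi)"
proof -
  have int: "((\<lambda>t. cos (u * of_real t)) has_integral SS x u) (cbox 0 x)"
    using SS_integral[OF assms(1)] by simp
  have B: "cmod (cos (u * of_real t)) \<le> exp (L * pi)" if t: "t \<in> cbox 0 x" for t
  proof -
    have "\<bar>Im (u * of_real t)\<bar> = \<bar>Im u\<bar> * t" using t by (simp add: abs_mult)
    also have "\<dots> \<le> L * pi" using t assms by (intro mult_mono) auto
    finally show ?thesis
      using cmod_cos_le[of "u * of_real t"] by (meson exp_le_cancel_iff order.trans)
  qed
  show ?thesis using has_integral_bound[OF _ int B] assms by (simp add: mult.commute)
qed

lemma aux1: "(0::real) \<le> A \<Longrightarrow> 0 < c \<Longrightarrow> c \<le> 2 \<Longrightarrow> A \<le> 2*A/c"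
  by (simp add: field_simps mult_left_mono)
lemma aux2: "(0::real) \<le> A \<Longrightarrow> 1 \<le> c \<Longrightarrow> A/c \<le> 2*A/(1+c)"
  by (simp add: field_simps) (metis mult_left_mono mult.right_neutral)

lemma SS_bound:
  assumes "0 \<le> x" "x \<le> pi" "\<bar>Im u\<bar> \<le> L"
  shows "cmod (SS x u) \<le> 2 * pi * exp (L * pi) / (1 + cmod u)"
proof (cases "cmod u \<le> 1")
  case True
  have "cmod (SS x u) \<le> x * exp (L * pi)" by (rule SS_bound0[OF assms])
  also have "\<dots> \<le> pi * exp (L * pi)" using assms by (intro mult_right_mono) auto
  also have "\<dots> \<le> 2 * (pi * exp (L * pi)) / (1 + cmod u)"
    using True by (intro aux1) (auto simp: add_pos_nonneg)
  finally show ?thesis by (simp add: mult.assoc)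
next
  case False
  then have u0: "u \<noteq> 0" by auto
  have "\<bar>Im (u * of_real x)\<bar> = \<bar>Im u\<bar> * x" using assms by (simp add: abs_mult)
  also have "\<dots> \<le> L * pi" using assms by (intro mult_mono) auto
  finally have "cmod (sin (u * of_real x)) \<le> exp (L * pi)"
    using cmod_sin_le[of "u * of_real x"] by (meson exp_le_cancel_iff order.trans)
  then have "cmod (SS x u) \<le> exp (L * pi) / cmod u"
    using u0 by (simp add: SS_def norm_divide divide_right_mono)
  also have "\<dots> \<le> 2 * exp (L * pi) / (1 + cmod u)"
    using False by (intro aux2) auto
  also have "\<dots> \<le> 2 * pi * exp (L * pi) / (1 + cmod u)"
  proof (intro divide_right_mono)
    show "2 * exp (L * pi) \<le> 2 * pi * exp (L * pi)"
      using pi_ge_two by (simp add: mult_right_mono)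
  qed (simp add: add_nonneg_nonneg)
  finally show ?thesis .
qed

lemma cball_trans: "w \<in> cball z s \<Longrightarrow> z \<in> cball c t \<Longrightarrow> w \<in> cball c (t+s)"
  unfolding mem_cball by metric

lemma deriv_bound_disc:
  assumes F: "F holomorphic_on UNIV" and r: "r > 0"
    and M: "\<And>w. w \<in> cball z r \<Longrightarrow> cmod (F w) \<le> M"
  shows "cmod (deriv F z) \<le> M / r"
proof (rule field_le_epsilon)
  fix e :: real assume e: "e > 0"
  have "cmod ((deriv ^^ 1) F z) \<le> fact 1 * (M + e * r) / r ^ 1"
  proof (rule Cauchy_higher_deriv_bound[where y=0])
    show "F holomorphic_on ball z r" using F by (rule holomorphic_on_subset) auto
    show "continuous_on (cball z r) F"
      using F holomorphic_on_imp_continuous_on continuous_on_subset by blast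
    fix w assume "w \<in> ball z r"
    then have "cmod (F w) \<le> M" using M by auto
    moreover have "e * r > 0" using e r by simp
    ultimately show "F w \<in> ball 0 (M + e * r)" by simp
  qed (use r in auto)
  then show "cmod (deriv F z) \<le> M / r + e" using r by (simp add: add_divide_distrib)
qed

lemma F_lip:
  assumes F: "F holomorphic_on UNIV" and r: "r > 0"
    and M: "\<And>w. w \<in> cball c (4*r) \<Longrightarrow> cmod (F w) \<le> M"
    and a: "a \<in> cball c (2*r)" and b: "b \<in> cball c (2*r)"
  shows "cmod (F a - F b) \<le> M / (2*r) * cmod (a - b)"
proof (rule field_differentiable_bound[of "cball c (2*r)" F "deriv F"])
  fix z assume z: "z \<in> cball c (2*r)"
  show "(F has_field_derivative deriv F z) (at z within cball c (2*r))"
    using F by (auto intro: holomorphic_derivI)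
  show "cmod (deriv F z) \<le> M / (2*r)"
  proof (rule deriv_bound_disc[OF F])
    fix w assume "w \<in> cball z (2*r)"
    then have "w \<in> cball c (4*r)" using cball_trans[of w z _ c] z by fastforce
    then show "cmod (F w) \<le> M" by (rule M)
  qed (use r in auto)
qed (use a b in auto)

definition dd :: "(complex \<Rightarrow> complex) \<Rightarrow> complex \<Rightarrow> complex \<Rightarrow> complex" where
  "dd F a b = (if a = b then deriv F a else (F a - F b) / (a - b))"

lemma dd_holo:
  assumes F: "F holomorphic_on UNIV"
  shows "(\<lambda>z. dd F z b) holomorphic_on UNIV"
proof -
  have "(\<lambda>z. if z = b then deriv F b else (F z - F b)/(z-b)) holomorphic_on UNIV"
    by (rule pole_lemma_open[OF F]) simp
  moreover have "(\<lambda>z. if z = b then deriv F b else (F z - F b)/(z-b)) = (\<lambda>z. dd F z b)"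
    by (auto simp: dd_def fun_eq_iff)
  ultimately show ?thesis by simp
qed

lemma dd_bound:
  assumes F: "F holomorphic_on UNIV" and r: "r > 0"
    and M: "\<And>w. w \<in> cball c (4*r) \<Longrightarrow> cmod (F w) \<le> M"
    and a: "a \<in> cball c (2*r)" and b: "b \<in> cball c (2*r)"
  shows "cmod (dd F a b) \<le> M / (2*r)"
proof (cases "a = b")
  case True
  have "cmod (deriv F a) \<le> M / (2*r)"
  proof (rule deriv_bound_disc[OF F])
    fix w assume "w \<in> cball a (2*r)"
    then have "w \<in> cball c (4*r)" using cball_trans[of w a _ c] a by fastforce
    then show "cmod (F w) \<le> M" by (rule M)
  qed (use r in auto)
  then show ?thesis using True by (simp add: dd_def)
next
  case False
  have "cmod (F a - F b) \<le> M / (2*r) * cmod (a - b)" by (rule F_lip[OF F r M a b])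
  then show ?thesis using False by (simp add: dd_def norm_divide divide_le_eq)
qed

lemma dd_lip:
  assumes F: "F holomorphic_on UNIV" and r: "r > 0"
    and M: "\<And>w. w \<in> cball c (4*r) \<Longrightarrow> cmod (F w) \<le> M"
    and a1: "a1 \<in> cball c r" and a2: "a2 \<in> cball c r" and b: "b \<in> cball c r"
  shows "cmod (dd F a1 b - dd F a2 b) \<le> M / (2*r*r) * cmod (a1 - a2)"
proof (rule field_differentiable_bound[of "cball c r" "\<lambda>z. dd F z b" "deriv (\<lambda>z. dd F z b)"])
  have G: "(\<lambda>z. dd F z b) holomorphic_on UNIV" by (rule dd_holo[OF F])
  have b2: "b \<in> cball c (2*r)" using b r by (auto simp: mem_cball)
  fix z assume z: "z \<in> cball c r"
  show "((\<lambda>z. dd F z b) has_field_derivative deriv (\<lambda>z. dd F z b) z) (at z within cball c r)"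
    using G by (auto intro: holomorphic_derivI)
  have "cmod (deriv (\<lambda>z. dd F z b) z) \<le> (M / (2*r)) / r"
  proof (rule deriv_bound_disc[OF G r])
    fix w assume "w \<in> cball z r"
    then have "w \<in> cball c (2*r)" using cball_trans[of w z _ c] z by fastforce
    then show "cmod (dd F w b) \<le> M / (2*r)"
      using dd_bound[OF F r M _ b2] by blast
  qed
  then show "cmod (deriv (\<lambda>z. dd F z b) z) \<le> M / (2*r*r)" by (simp add: field_simps)
qed (use a1 a2 in auto)

lemma SS_holo': "f holomorphic_on A \<Longrightarrow> (\<lambda>z. SS x (f z)) holomorphic_on A"
  using holomorphic_on_compose[of f A "SS x"] holomorphic_on_subset[OF SS_holo]
  by (auto simp: o_def)

lemma EE_holo1: "(\<lambda>z. EE x z w) holomorphic_on UNIV"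
  unfolding EE_def by (intro holomorphic_intros SS_holo') auto

lemma EE_holo2: "(\<lambda>w. EE x z w) holomorphic_on UNIV"
  unfolding EE_def by (intro holomorphic_intros SS_holo') auto

lemma n3: "norm (a - b + c) \<le> norm a + norm b + norm (c::'a::real_normed_vector)"
  using norm_triangle_ineq[of "a-b" c] norm_triangle_ineq4[of a b] by linarith
lemma n3': "norm (a - b - c) \<le> norm a + norm b + norm (c::'a::real_normed_vector)"
  using norm_triangle_ineq4[of "a-b" c] norm_triangle_ineq4[of a b] by linarith

lemma half2: "((y::real) + y) / 2 = y" by simp

lemma aux3:
  fixes K s A B :: real
  assumes "0 \<le> K" "0 \<le> s" "0 \<le> A" "0 \<le> B" "B \<le> A + s"
  shows "K / (1 + A) \<le> K * (1 + s) / (1 + B)"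
proof -
  have e: "(1 + s) * (1 + A) = 1 + A + s + s * A" by (simp add: algebra_simps)
  have "0 \<le> s * A" using assms by simp
  then have "1 + B \<le> (1 + s) * (1 + A)" using e assms by linarith
  then have "K * (1 + B) \<le> K * (1 + s) * (1 + A)" using assms
    by (metis mult.assoc mult_left_mono)
  then show ?thesis using assms by (simp add: field_simps)
qed

definition K0 :: "real \<Rightarrow> real" where
  "K0 r = 2 * pi * exp (8 * r * pi) * (1 + 8 * r)"

lemma K0_nonneg: "r \<ge> 0 \<Longrightarrow> K0 r \<ge> 0"
  by (simp add: K0_def)

lemma EE_bound:
  assumes x: "0 \<le> x" "x \<le> pi" and r: "r \<ge> 0" and cr: "cr \<ge> 0" and dr: "dr \<ge> 0"
    and z: "z \<in> cball (of_real cr) (4*r)" and w: "w \<in> cball (of_real dr) (4*r)"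
  shows "cmod (EE x z w) \<le> K0 r / (1 + \<bar>cr - dr\<bar>)"
proof -
  have zc: "cmod (z - of_real cr) \<le> 4*r" using z by (simp add: mem_cball dist_norm norm_minus_commute)
  have wd: "cmod (w - of_real dr) \<le> 4*r" using w by (simp add: mem_cball dist_norm norm_minus_commute)
  have iz: "\<bar>Im z\<bar> \<le> 4*r" using abs_Im_le_cmod[of "z - of_real cr"] zc by simp
  have iw: "\<bar>Im w\<bar> \<le> 4*r" using abs_Im_le_cmod[of "w - of_real dr"] wd by simp
  have L1: "\<bar>Im (z - w)\<bar> \<le> 8*r" using iz iw by simp
  have L2: "\<bar>Im (z + w)\<bar> \<le> 8*r" using iz iw by simp
  define K where "K = 2 * pi * exp (8 * r * pi)"
  have K: "K \<ge> 0" by (simp add: K_def)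
  have s1: "cmod (SS x (z - w)) \<le> K / (1 + cmod (z - w))"
    using SS_bound[OF x L1] by (simp add: K_def mult.assoc)
  have s2: "cmod (SS x (z + w)) \<le> K / (1 + cmod (z + w))"
    using SS_bound[OF x L2] by (simp add: K_def mult.assoc)
  have t1: "\<bar>cr - dr\<bar> \<le> cmod (z - w) + 8*r"
  proof -
    have "\<bar>cr - dr\<bar> = cmod (of_real cr - of_real dr :: complex)"
      by (metis norm_of_real of_real_diff)
    also have "of_real cr - of_real dr = (z - w) - (z - of_real cr) + (w - of_real dr)" by simp
    also have "cmod \<dots> \<le> cmod (z - w) + cmod (z - of_real cr) + cmod (w - of_real dr)"
      by (rule n3)
    finally show ?thesis using zc wd by simp
  qed
  have t2: "\<bar>cr - dr\<bar> \<le> cmod (z + w) + 8*r"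
  proof -
    have "\<bar>cr - dr\<bar> \<le> cr + dr" using cr dr by simp
    also have "cr + dr = cmod (of_real cr + of_real dr :: complex)"
      using cr dr by (metis abs_of_nonneg add_nonneg_nonneg norm_of_real of_real_add)
    also have "of_real cr + of_real dr = (z + w) - (z - of_real cr) - (w - of_real dr)" by simp
    also have "cmod \<dots> \<le> cmod (z + w) + cmod (z - of_real cr) + cmod (w - of_real dr)"
      by (rule n3')
    finally show ?thesis using zc wd by simp
  qed
  have u1: "K / (1 + cmod (z - w)) \<le> K * (1 + 8*r) / (1 + \<bar>cr - dr\<bar>)"
    by (rule aux3) (use K r t1 in auto)
  have u2: "K / (1 + cmod (z + w)) \<le> K * (1 + 8*r) / (1 + \<bar>cr - dr\<bar>)"
    by (rule aux3) (use K r t2 in auto)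
  have "cmod (EE x z w) \<le> (cmod (SS x (z - w)) + cmod (SS x (z + w))) / 2"
    unfolding EE_def by (simp add: norm_divide norm_triangle_ineq divide_right_mono)
  also have "\<dots> \<le> (K * (1 + 8*r) / (1 + \<bar>cr - dr\<bar>) + K * (1 + 8*r) / (1 + \<bar>cr - dr\<bar>)) / 2"
    using s1 s2 u1 u2 by (intro divide_right_mono add_mono) auto
  also have "\<dots> = K * (1 + 8*r) / (1 + \<bar>cr - dr\<bar>)" by (rule half2)
  also have "\<dots> = K0 r / (1 + \<bar>cr - dr\<bar>)" by (simp add: K0_def K_def)
  finally show ?thesis .
qed

lemma sqrtb_sq: "(sqrtb z)^2 = z"
  by (simp add: sqrtb_def power2_csqrt)

lemma lam_rho: "lam S k = (rho S k)^2"
  by (simp add: rho_def sqrtb_sq)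

lemma sum2: "(\<Sum>l<(2::nat). f l) = f 0 + (f 1 :: complex)"
  by (simp add: numeral_2_eq_2)

lemma Qt_eq: "x \<ge> 0 \<Longrightarrow> Qt p S x n i k j = alph_i p S k j * EE x (rho_i p S n i) (rho_i p S k j)"
  by (simp add: Qt_def tD_EE)

lemma deriv_EE_c:
  "deriv (\<lambda>z. a * EE x z w) c = a * deriv (\<lambda>z. EE x z w) c"
  by (rule deriv_cmult) (use EE_holo1 in \<open>auto simp: holomorphic_on_def field_differentiable_at_within\<close>)

lemma Hm_eq:
  assumes x: "x \<ge> 0"
  shows "Hm p S x n k i j =
    (let r = rho S n; c = rhoT p n; mu = rho S k; mt = rhoT p k; a = alph S k; aT = alphT p k in
     if i = 0 then (if j = 0 then (mu - mt) * (a * dd (\<lambda>z. EE x z mu) r c)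
                    else a * dd (\<lambda>z. EE x z mu) r c - aT * dd (\<lambda>z. EE x z mt) r c)
     else (if j = 0 then (mu - mt) * (a * EE x c mu) else a * EE x c mu - aT * EE x c mt))"
proof (cases "rhohat p S n = 0")
  case True
  then have rc: "rho S n = rhoT p n" by (simp add: rhohat_def)
  have f1: "(\<lambda>r. alph_i p S k 0 * tD x (r\<^sup>2) (lam_i p S k 0)) = (\<lambda>r. alph S k * EE x r (rho S k))"
    using x by (simp add: fun_eq_iff lam_i_def alph_i_def lam_rho tD_EE)
  have f2: "(\<lambda>r. alph_i p S k 1 * tD x (r\<^sup>2) (lam_i p S k 1)) = (\<lambda>r. alphT p k * EE x r (rhoT p k))"
    using x by (simp add: fun_eq_iff lam_i_def alph_i_def lamT_def tD_EE)
  show ?thesis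
    using True x unfolding Hm_def f1 f2 deriv_EE_c
    by (simp add: Let_def mmult2_def mat2_def sum2 Tinv_def Qt_eq rho_i_def alph_i_def rc dd_def rhohat_def algebra_simps)
next
  case False
  then have rc: "rho S n - rhoT p n \<noteq> 0" by (simp add: rhohat_def)
  then have rc': "rho S n \<noteq> rhoT p n" by simp
  show ?thesis
    using False x rc rc' unfolding Hm_def
    by (simp add: Let_def mmult2_def mat2_def sum2 Tinv_def Tm_def Qm_def Qt_eq rho_i_def alph_i_def dd_def rhohat_def diff_divide_distrib algebra_simps)
qed

lemma psiT_eq:
  "psiT p S n 0 x = dd (\<lambda>z. cos (z * of_real x)) (rho S n) (rhoT p n)"
proof (cases "rhohat p S n = 0")
  case True
  have "deriv (\<lambda>z. cos (z * of_real x)) (rhoT p n) = - of_real x * sin (rhoT p n * of_real x)"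
  proof (rule DERIV_imp_deriv)
    show "((\<lambda>z. cos (z * of_real x)) has_field_derivative - of_real x * sin (rhoT p n * of_real x)) (at (rhoT p n))"
      by (auto intro!: derivative_eq_intros)
  qed
  then show ?thesis using True by (simp add: psiT_def dd_def rhohat_def rho_i_def)
next
  case False
  then show ?thesis
    by (simp add: psiT_def dd_def rhohat_def rho_i_def mvmult2_def sum2 Tm_def mat2_def phiT_def diff_divide_distrib)
qed

lemma dd_lin:
  assumes F1: "F1 holomorphic_on UNIV" and F2: "F2 holomorphic_on UNIV"
  shows "dd (\<lambda>z. a * F1 z - b * F2 z) r c = a * dd F1 r c - b * dd F2 r c"
proof (cases "r = c")
  case True
  have d1: "(F1 has_field_derivative deriv F1 r) (at r)" using F1 by (auto intro: holomorphic_derivI)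
  have d2: "(F2 has_field_derivative deriv F2 r) (at r)" using F2 by (auto intro: holomorphic_derivI)
  have "((\<lambda>z. a * F1 z - b * F2 z) has_field_derivative a * deriv F1 r - b * deriv F2 r) (at r)"
    by (intro DERIV_diff DERIV_cmult d1 d2)
  then have "deriv (\<lambda>z. a * F1 z - b * F2 z) r = a * deriv F1 r - b * deriv F2 r"
    by (rule DERIV_imp_deriv)
  then show ?thesis using True by (simp add: dd_def)
next
  case False
  have "a * F1 r - b * F2 r - (a * F1 c - b * F2 c) = a * (F1 r - F1 c) - b * (F2 r - F2 c)"
    by (simp add: algebra_simps)
  then show ?thesis using False by (simp add: dd_def diff_divide_distrib times_divide_eq_right right_diff_distrib)
qed

context
  fixes x r cr dr :: real
  assumes x0: "0 \<le> x" and xpi: "x \<le> pi" and r0: "r > 0" and cr0: "cr \<ge> 0" and dr0: "dr \<ge> 0"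
begin

definition "VV = K0 r / (1 + \<bar>cr - dr\<bar>)"

lemma VV_nonneg: "VV \<ge> 0"
  using K0_nonneg[of r] r0 by (simp add: VV_def)

lemma L_E: "z \<in> cball (of_real cr) (4*r) \<Longrightarrow> w \<in> cball (of_real dr) (4*r) \<Longrightarrow> cmod (EE x z w) \<le> VV"
  unfolding VV_def by (rule EE_bound[OF x0 xpi _ cr0 dr0]) (use r0 in auto)

lemma L_Ew_lip:
  assumes z: "z \<in> cball (of_real cr) (4*r)" and w1: "w1 \<in> cball (of_real dr) (2*r)" and w2: "w2 \<in> cball (of_real dr) (2*r)"
  shows "cmod (EE x z w1 - EE x z w2) \<le> VV / (2*r) * cmod (w1 - w2)"
  by (rule F_lip[OF EE_holo2 r0 _ w1 w2]) (rule L_E[OF z])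

lemma L_G:
  assumes z: "z \<in> cball (of_real cr) (4*r)" and w1: "w1 \<in> cball (of_real dr) (2*r)" and w2: "w2 \<in> cball (of_real dr) (2*r)"
    and a2: "cmod a2 \<le> A"
  shows "cmod (a1 * EE x z w1 - a2 * EE x z w2) \<le> VV * (cmod (a1 - a2) + A * cmod (w1 - w2) / (2*r))"
proof -
  have A0: "0 \<le> A" using a2 norm_ge_zero order_trans by blast
  have w1': "w1 \<in> cball (of_real dr) (4*r)" using w1 r0 by (auto simp: mem_cball)
  have e: "a1 * EE x z w1 - a2 * EE x z w2 = (a1 - a2) * EE x z w1 + a2 * (EE x z w1 - EE x z w2)"
    by (simp add: algebra_simps)
  have "cmod (a1 * EE x z w1 - a2 * EE x z w2) \<le> cmod (a1 - a2) * cmod (EE x z w1) + cmod a2 * cmod (EE x z w1 - EE x z w2)"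
    unfolding e by (metis norm_mult norm_triangle_ineq)
  also have "\<dots> \<le> cmod (a1 - a2) * VV + A * (VV / (2*r) * cmod (w1 - w2))"
    by (intro add_mono mult_mono L_E[OF z w1'] L_Ew_lip[OF z w1 w2] a2) (use VV_nonneg r0 A0 in auto)
  also have "\<dots> = VV * (cmod (a1 - a2) + A * cmod (w1 - w2) / (2*r))"
    by (simp add: algebra_simps)
  finally show ?thesis .
qed

lemma G_holo: "(\<lambda>z. a1 * EE x z w1 - a2 * EE x z w2) holomorphic_on UNIV"
  by (intro holomorphic_intros EE_holo1)

lemma G_dd_bound:
  assumes w1: "w1 \<in> cball (of_real dr) (2*r)" and w2: "w2 \<in> cball (of_real dr) (2*r)"
    and a2: "cmod a2 \<le> A" and r1: "r1 \<in> cball (of_real cr) r"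
  shows "cmod (dd (\<lambda>z. a1 * EE x z w1 - a2 * EE x z w2) r1 (of_real cr))
     \<le> VV * (cmod (a1 - a2) + A * cmod (w1 - w2) / (2*r)) / (2*r)"
  by (rule dd_bound[OF G_holo r0 L_G[OF _ w1 w2 a2]]) (use r1 r0 in \<open>auto simp: mem_cball\<close>)

lemma G_dd_lip:
  assumes w1: "w1 \<in> cball (of_real dr) (2*r)" and w2: "w2 \<in> cball (of_real dr) (2*r)"
    and a2: "cmod a2 \<le> A" and r1: "r1 \<in> cball (of_real cr) r" and r2: "r2 \<in> cball (of_real cr) r"
  shows "cmod (dd (\<lambda>z. a1 * EE x z w1 - a2 * EE x z w2) r1 (of_real cr) - dd (\<lambda>z. a1 * EE x z w1 - a2 * EE x z w2) r2 (of_real cr))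
     \<le> VV * (cmod (a1 - a2) + A * cmod (w1 - w2) / (2*r)) / (2*r*r) * cmod (r1 - r2)"
  by (rule dd_lip[OF G_holo r0 L_G[OF _ w1 w2 a2] r1 r2]) (use r0 in auto)

lemma E_dd_bound:
  assumes w: "w \<in> cball (of_real dr) (4*r)" and r1: "r1 \<in> cball (of_real cr) r"
  shows "cmod (dd (\<lambda>z. EE x z w) r1 (of_real cr)) \<le> VV / (2*r)"
  by (rule dd_bound[OF EE_holo1 r0 L_E[OF _ w]]) (use r1 r0 in \<open>auto simp: mem_cball\<close>)

lemma E_dd_lip:
  assumes w: "w \<in> cball (of_real dr) (4*r)" and r1: "r1 \<in> cball (of_real cr) r" and r2: "r2 \<in> cball (of_real cr) r"
  shows "cmod (dd (\<lambda>z. EE x z w) r1 (of_real cr) - dd (\<lambda>z. EE x z w) r2 (of_real cr)) \<le> VV / (2*r*r) * cmod (r1 - r2)"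
  by (rule dd_lip[OF EE_holo1 r0 L_E[OF _ w] r1 r2]) (use r0 in auto)

lemma m_le:
  assumes "A \<ge> 0"
  shows "cmod (a1 - a2) + A * cmod (w1 - w2) / (2*r) \<le> (1 + A/(2*r)) * (cmod (w1 - w2) + cmod (a1 - a2))"
proof -
  have "A * cmod (w1 - w2) / (2*r) \<le> A / (2*r) * cmod (w1 - w2) + A/(2*r) * cmod (a1 - a2)"
    using assms r0 by (simp add: mult_nonneg_nonneg)
  then show ?thesis by (simp add: algebra_simps)
qed

lemma n3p: "norm (a + b + c) \<le> norm a + norm b + norm (c::'a::real_normed_vector)"
  using norm_triangle_ineq[of "a+b" c] norm_triangle_ineq[of a b] by linarith

lemma eqB00: "(r::real) > 0 \<Longrightarrow> dk*(A*(V/(2*r))) + r*(V*(P*dk)/(2*r)) + X*(A*(V/(2*r*r)*n)) = (A/(2*r) + P/2)*V*dk + A/(2*r*r)*V*(X*n)"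
  by (simp add: field_simps)
lemma eqB01: "(r::real) > 0 \<Longrightarrow> V*(P*d)/(2*r) + V*(P*X)/(2*r*r)*n = P/(2*r)*V*d + P/(2*r*r)*V*(X*n)"
  by (simp add: field_simps)

lemma c_in: "(of_real cr :: complex) \<in> cball (of_real cr) (4*r)" using r0 by simp

lemma B10:
  assumes m1: "mu1 \<in> cball (of_real dr) r" and m2: "mu2 \<in> cball (of_real dr) r"
    and a1: "cmod a1 \<le> A" and a2: "cmod a2 \<le> A"
  shows "cmod ((mu1 - of_real dr) * (a1 * EE x (of_real cr) mu1) - (mu2 - of_real dr) * (a2 * EE x (of_real cr) mu2))
    \<le> (A + r * (1 + A/(2*r))) * VV * (cmod (mu1 - mu2) + cmod (a1 - a2))"
proof -
  have A0: "0 \<le> A" using a2 norm_ge_zero order_trans by blast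
  have m1': "mu1 \<in> cball (of_real dr) (2*r)" "mu1 \<in> cball (of_real dr) (4*r)" using m1 r0 by (auto simp: mem_cball)
  have m2': "mu2 \<in> cball (of_real dr) (2*r)" using m2 r0 by (auto simp: mem_cball)
  have m2n: "cmod (mu2 - of_real dr) \<le> r" using m2 by (simp add: mem_cball dist_norm norm_minus_commute)
  define dk where "dk = cmod (mu1 - mu2) + cmod (a1 - a2)"
  have dk0: "dk \<ge> 0" by (simp add: dk_def)
  have e: "(mu1 - of_real dr) * (a1 * EE x (of_real cr) mu1) - (mu2 - of_real dr) * (a2 * EE x (of_real cr) mu2)
    = (mu1 - mu2) * (a1 * EE x (of_real cr) mu1) + (mu2 - of_real dr) * (a1 * EE x (of_real cr) mu1 - a2 * EE x (of_real cr) mu2)"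
    by (simp add: algebra_simps)
  have t1: "cmod (a1 * EE x (of_real cr) mu1) \<le> A * VV"
    unfolding norm_mult by (intro mult_mono a1 L_E[OF c_in m1'(2)]) (use A0 in auto)
  have t2: "cmod (a1 * EE x (of_real cr) mu1 - a2 * EE x (of_real cr) mu2) \<le> VV * ((1 + A/(2*r)) * dk)"
    using L_G[OF c_in m1'(1) m2' a2] m_le[OF A0, of a1 a2 mu1 mu2] VV_nonneg
    by (simp add: dk_def) (meson mult_left_mono order_trans)
  have "cmod ((mu1 - mu2) * (a1 * EE x (of_real cr) mu1) + (mu2 - of_real dr) * (a1 * EE x (of_real cr) mu1 - a2 * EE x (of_real cr) mu2))
      \<le> cmod (mu1 - mu2) * cmod (a1 * EE x (of_real cr) mu1) + cmod (mu2 - of_real dr) * cmod (a1 * EE x (of_real cr) mu1 - a2 * EE x (of_real cr) mu2)"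
    by (metis norm_mult norm_triangle_ineq)
  also have "\<dots> \<le> dk * (A * VV) + r * (VV * ((1 + A/(2*r)) * dk))"
    by (intro add_mono mult_mono t1 t2 m2n) (use dk_def VV_nonneg A0 r0 in auto)
  also have "\<dots> = (A + r * (1 + A/(2*r))) * VV * dk" by (simp add: algebra_simps)
  finally show ?thesis unfolding e dk_def .
qed

lemma B11:
  assumes m1: "mu1 \<in> cball (of_real dr) r" and m2: "mu2 \<in> cball (of_real dr) r"
    and a2: "cmod a2 \<le> A"
  shows "cmod ((a1 * EE x (of_real cr) mu1 - aT * EE x (of_real cr) (of_real dr)) - (a2 * EE x (of_real cr) mu2 - aT * EE x (of_real cr) (of_real dr)))
    \<le> (1 + A/(2*r)) * VV * (cmod (mu1 - mu2) + cmod (a1 - a2))"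
proof -
  have A0: "0 \<le> A" using a2 norm_ge_zero order_trans by blast
  have m1': "mu1 \<in> cball (of_real dr) (2*r)" using m1 r0 by (auto simp: mem_cball)
  have m2': "mu2 \<in> cball (of_real dr) (2*r)" using m2 r0 by (auto simp: mem_cball)
  have "cmod (a1 * EE x (of_real cr) mu1 - a2 * EE x (of_real cr) mu2) \<le> VV * ((1 + A/(2*r)) * (cmod (mu1 - mu2) + cmod (a1 - a2)))"
    using L_G[OF c_in m1' m2' a2] m_le[OF A0, of a1 a2 mu1 mu2] VV_nonneg
    by (meson mult_left_mono order_trans)
  moreover have "(a1 * EE x (of_real cr) mu1 - aT * EE x (of_real cr) (of_real dr)) - (a2 * EE x (of_real cr) mu2 - aT * EE x (of_real cr) (of_real dr))
    = a1 * EE x (of_real cr) mu1 - a2 * EE x (of_real cr) mu2" by simp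
  ultimately show ?thesis by (simp only: mult_ac)
qed

lemma B00:
  assumes m1: "mu1 \<in> cball (of_real dr) r" and m2: "mu2 \<in> cball (of_real dr) r"
    and a1: "cmod a1 \<le> A" and a2: "cmod a2 \<le> A"
    and r1: "r1 \<in> cball (of_real cr) r" and r2: "r2 \<in> cball (of_real cr) r"
    and X: "cmod (mu2 - of_real dr) \<le> X"
  shows "cmod ((mu1 - of_real dr) * (a1 * dd (\<lambda>z. EE x z mu1) r1 (of_real cr)) - (mu2 - of_real dr) * (a2 * dd (\<lambda>z. EE x z mu2) r2 (of_real cr)))
    \<le> (A/(2*r) + (1 + A/(2*r))/2) * VV * (cmod (mu1 - mu2) + cmod (a1 - a2)) + A/(2*r*r) * VV * (X * cmod (r1 - r2))"
proof -
  have A0: "0 \<le> A" using a2 norm_ge_zero order_trans by blast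
  have X0: "0 \<le> X" using X norm_ge_zero order_trans by blast
  have m1': "mu1 \<in> cball (of_real dr) (2*r)" "mu1 \<in> cball (of_real dr) (4*r)" using m1 r0 by (auto simp: mem_cball)
  have m2': "mu2 \<in> cball (of_real dr) (2*r)" "mu2 \<in> cball (of_real dr) (4*r)" using m2 r0 by (auto simp: mem_cball)
  have m2n: "cmod (mu2 - of_real dr) \<le> r" using m2 by (simp add: mem_cball dist_norm norm_minus_commute)
  define dk where "dk = cmod (mu1 - mu2) + cmod (a1 - a2)"
  define D1 where "D1 = dd (\<lambda>z. EE x z mu1) r1 (of_real cr)"
  define D2 where "D2 = dd (\<lambda>z. EE x z mu2) r1 (of_real cr)"
  define D2' where "D2' = dd (\<lambda>z. EE x z mu2) r2 (of_real cr)"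
  have lin: "a1 * D1 - a2 * D2 = dd (\<lambda>z. a1 * EE x z mu1 - a2 * EE x z mu2) r1 (of_real cr)"
    unfolding D1_def D2_def by (rule dd_lin[symmetric]) (rule EE_holo1)+
  have e: "(mu1 - of_real dr) * (a1 * D1) - (mu2 - of_real dr) * (a2 * D2')
    = (mu1 - mu2) * (a1 * D1) + (mu2 - of_real dr) * (a1 * D1 - a2 * D2) + (mu2 - of_real dr) * (a2 * (D2 - D2'))"
    by (simp add: algebra_simps)
  have t1: "cmod (a1 * D1) \<le> A * (VV / (2*r))"
    unfolding norm_mult D1_def by (intro mult_mono a1 E_dd_bound[OF m1'(2) r1]) (use A0 in auto)
  have t2: "cmod (a1 * D1 - a2 * D2) \<le> VV * ((1 + A/(2*r)) * dk) / (2*r)"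
  proof -
    have "cmod (a1 * D1 - a2 * D2) \<le> VV * (cmod (a1 - a2) + A * cmod (mu1 - mu2) / (2*r)) / (2*r)"
      unfolding lin by (rule G_dd_bound[OF m1'(1) m2'(1) a2 r1])
    also have "\<dots> \<le> VV * ((1 + A/(2*r)) * dk) / (2*r)"
      using m_le[OF A0, of a1 a2 mu1 mu2] VV_nonneg r0 unfolding dk_def
      by (intro divide_right_mono mult_left_mono) auto
    finally show ?thesis .
  qed
  have t3: "cmod (a2 * (D2 - D2')) \<le> A * (VV / (2*r*r) * cmod (r1 - r2))"
    unfolding norm_mult D2_def D2'_def by (intro mult_mono a2 E_dd_lip[OF m2'(2) r1 r2]) (use A0 in auto)
  have "cmod ((mu1 - mu2) * (a1 * D1) + (mu2 - of_real dr) * (a1 * D1 - a2 * D2) + (mu2 - of_real dr) * (a2 * (D2 - D2')))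
     \<le> cmod (mu1 - mu2) * cmod (a1 * D1) + cmod (mu2 - of_real dr) * cmod (a1 * D1 - a2 * D2) + cmod (mu2 - of_real dr) * cmod (a2 * (D2 - D2'))"
    using n3p[of "(mu1 - mu2) * (a1 * D1)" "(mu2 - of_real dr) * (a1 * D1 - a2 * D2)" "(mu2 - of_real dr) * (a2 * (D2 - D2'))"]
    by (simp add: norm_mult)
  also have "\<dots> \<le> dk * (A * (VV / (2*r))) + r * (VV * ((1 + A/(2*r)) * dk) / (2*r)) + X * (A * (VV / (2*r*r) * cmod (r1 - r2)))"
    by (intro add_mono mult_mono t1 t2 t3 m2n X) (use dk_def VV_nonneg A0 r0 X0 in auto)
  also have "\<dots> = (A/(2*r) + (1 + A/(2*r))/2) * VV * dk + A/(2*r*r) * VV * (X * cmod (r1 - r2))"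
    by (rule eqB00[OF r0])
  finally have "cmod ((mu1 - of_real dr) * (a1 * D1) - (mu2 - of_real dr) * (a2 * D2'))
     \<le> (A/(2*r) + (1 + A/(2*r))/2) * VV * dk + A/(2*r*r) * VV * (X * cmod (r1 - r2))" unfolding e .
  then show ?thesis unfolding D1_def D2'_def dk_def .
qed

lemma B01:
  assumes m1: "mu1 \<in> cball (of_real dr) r" and m2: "mu2 \<in> cball (of_real dr) r"
    and a2: "cmod a2 \<le> A" and aT: "cmod aT \<le> A"
    and r1: "r1 \<in> cball (of_real cr) r" and r2: "r2 \<in> cball (of_real cr) r"
    and X: "cmod (mu2 - of_real dr) + cmod (a2 - aT) \<le> X"
  shows "cmod ((a1 * dd (\<lambda>z. EE x z mu1) r1 (of_real cr) - aT * dd (\<lambda>z. EE x z (of_real dr)) r1 (of_real cr))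
          - (a2 * dd (\<lambda>z. EE x z mu2) r2 (of_real cr) - aT * dd (\<lambda>z. EE x z (of_real dr)) r2 (of_real cr)))
    \<le> (1 + A/(2*r))/(2*r) * VV * (cmod (mu1 - mu2) + cmod (a1 - a2)) + (1 + A/(2*r))/(2*r*r) * VV * (X * cmod (r1 - r2))"
proof -
  have A0: "0 \<le> A" using a2 norm_ge_zero order_trans by blast
  have m1': "mu1 \<in> cball (of_real dr) (2*r)" using m1 r0 by (auto simp: mem_cball)
  have m2': "mu2 \<in> cball (of_real dr) (2*r)" using m2 r0 by (auto simp: mem_cball)
  have d': "(of_real dr :: complex) \<in> cball (of_real dr) (2*r)" using r0 by simp
  define G1 where "G1 = (\<lambda>z. a1 * EE x z mu1 - a2 * EE x z mu2)"
  define G2 where "G2 = (\<lambda>z. a2 * EE x z mu2 - aT * EE x z (of_real dr))"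
  have lin1: "dd G1 r1 (of_real cr) = a1 * dd (\<lambda>z. EE x z mu1) r1 (of_real cr) - a2 * dd (\<lambda>z. EE x z mu2) r1 (of_real cr)"
    unfolding G1_def by (rule dd_lin) (rule EE_holo1)+
  have lin2: "dd G2 q (of_real cr) = a2 * dd (\<lambda>z. EE x z mu2) q (of_real cr) - aT * dd (\<lambda>z. EE x z (of_real dr)) q (of_real cr)" for q
    unfolding G2_def by (rule dd_lin) (rule EE_holo1)+
  have e: "(a1 * dd (\<lambda>z. EE x z mu1) r1 (of_real cr) - aT * dd (\<lambda>z. EE x z (of_real dr)) r1 (of_real cr))
          - (a2 * dd (\<lambda>z. EE x z mu2) r2 (of_real cr) - aT * dd (\<lambda>z. EE x z (of_real dr)) r2 (of_real cr))
        = dd G1 r1 (of_real cr) + (dd G2 r1 (of_real cr) - dd G2 r2 (of_real cr))"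
    unfolding lin1 lin2 by (simp add: algebra_simps)
  have t1: "cmod (dd G1 r1 (of_real cr)) \<le> VV * ((1 + A/(2*r)) * (cmod (mu1 - mu2) + cmod (a1 - a2))) / (2*r)"
  proof -
    have "cmod (dd G1 r1 (of_real cr)) \<le> VV * (cmod (a1 - a2) + A * cmod (mu1 - mu2) / (2*r)) / (2*r)"
      unfolding G1_def by (rule G_dd_bound[OF m1' m2' a2 r1])
    also have "\<dots> \<le> VV * ((1 + A/(2*r)) * (cmod (mu1 - mu2) + cmod (a1 - a2))) / (2*r)"
      using m_le[OF A0, of a1 a2 mu1 mu2] VV_nonneg r0
      by (intro divide_right_mono mult_left_mono) auto
    finally show ?thesis .
  qed
  have t2: "cmod (dd G2 r1 (of_real cr) - dd G2 r2 (of_real cr)) \<le> VV * ((1 + A/(2*r)) * X) / (2*r*r) * cmod (r1 - r2)"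
  proof -
    have "cmod (dd G2 r1 (of_real cr) - dd G2 r2 (of_real cr)) \<le> VV * (cmod (a2 - aT) + A * cmod (mu2 - of_real dr) / (2*r)) / (2*r*r) * cmod (r1 - r2)"
      unfolding G2_def by (rule G_dd_lip[OF m2' d' aT r1 r2])
    also have "\<dots> \<le> VV * ((1 + A/(2*r)) * X) / (2*r*r) * cmod (r1 - r2)"
    proof -
      have "cmod (a2 - aT) + A * cmod (mu2 - of_real dr) / (2*r) \<le> (1 + A/(2*r)) * X"
      proof -
        have "(1 + A/(2*r)) * (cmod (mu2 - of_real dr) + cmod (a2 - aT)) \<le> (1 + A/(2*r)) * X"
          using X A0 r0 by (intro mult_left_mono) auto
        then show ?thesis using m_le[OF A0, of a2 aT mu2 "of_real dr"] by linarith
      qed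
      then show ?thesis using VV_nonneg r0
        by (intro mult_right_mono divide_right_mono mult_left_mono) auto
    qed
    finally show ?thesis .
  qed
  have "cmod (dd G1 r1 (of_real cr) + (dd G2 r1 (of_real cr) - dd G2 r2 (of_real cr)))
     \<le> VV * ((1 + A/(2*r)) * (cmod (mu1 - mu2) + cmod (a1 - a2))) / (2*r) + VV * ((1 + A/(2*r)) * X) / (2*r*r) * cmod (r1 - r2)"
    using norm_triangle_ineq[of "dd G1 r1 (of_real cr)" "dd G2 r1 (of_real cr) - dd G2 r2 (of_real cr)"] t1 t2 by linarith
  also have "\<dots> = (1 + A/(2*r))/(2*r) * VV * (cmod (mu1 - mu2) + cmod (a1 - a2)) + (1 + A/(2*r))/(2*r*r) * VV * (X * cmod (r1 - r2))"
    by (rule eqB01[OF r0])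
  finally show ?thesis unfolding e .
qed

end

definition rT :: "nat \<Rightarrow> nat \<Rightarrow> real" where
  "rT p n = (if n \<le> p + 1 then 0 else real (n - p - 1))"

lemma rhoT_rT: "rhoT p n = of_real (rT p n)"
  by (simp add: rhoT_def rT_def)

lemma rT_nonneg: "rT p n \<ge> 0" by (simp add: rT_def)

definition hn :: "nat \<Rightarrow> real" where "hn j = 1 / (1 + (real j)^2)"

lemma hn_nonneg: "hn j \<ge> 0" by (simp add: hn_def)

lemma hn_summable: "summable hn"
proof (rule summable_comparison_test)
  show "summable (\<lambda>j. 2 * inverse ((of_nat (Suc j) :: real) ^ 2))"
  proof -
    have s: "summable (\<lambda>n. inverse ((of_nat n :: real)^2))" by (rule inverse_power_summable) simp
    have "summable (\<lambda>n. inverse ((of_nat (Suc n) :: real)^2))"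
      by (rule summable_Suc_iff[THEN iffD2, OF s])
    then show ?thesis by (rule summable_mult)
  qed
  show "\<exists>N. \<forall>n\<ge>N. norm (hn n) \<le> 2 * inverse ((of_nat (Suc n) :: real) ^ 2)"
  proof (intro exI allI impI)
    fix n :: nat
    have "(real (Suc n))^2 \<le> 2 * (1 + (real n)^2)"
      using sum_squares_ge_zero[of "real n - 1" 0] by (simp add: power2_eq_square algebra_simps)
    then show "norm (hn n) \<le> 2 * inverse ((of_nat (Suc n) :: real) ^ 2)"
    proof -
      have pos: "0 < 1 + (real n)^2" by (simp add: add_pos_nonneg)
      from \<open>(real (Suc n))^2 \<le> 2 * (1 + (real n)^2)\<close> have "(real (Suc n))^2 / (1 + (real n)^2) \<le> 2"
        using pos by (simp add: divide_le_eq)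
      then show ?thesis by (simp add: hn_def field_simps del: of_nat_Suc)
    qed
  qed
qed

lemma h_partial:
  fixes cn N :: nat
  shows "(\<Sum>m<N. 1 / (1 + (real cn - real m)^2)) \<le> 2 * suminf hn"
proof -
  let ?A = "{m. m < N \<and> m \<le> cn}" and ?B = "{m. m < N \<and> cn < m}"
  have split: "{..<N} = ?A \<union> ?B" by auto
  have "(\<Sum>m<N. 1 / (1 + (real cn - real m)^2)) = (\<Sum>m\<in>?A. 1 / (1 + (real cn - real m)^2)) + (\<Sum>m\<in>?B. 1 / (1 + (real cn - real m)^2))"
    unfolding split by (rule sum.union_disjoint) auto
  also have "(\<Sum>m\<in>?A. 1 / (1 + (real cn - real m)^2)) = (\<Sum>m\<in>?A. hn (cn - m))"
    by (rule sum.cong) (auto simp: hn_def of_nat_diff)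
  also have "\<dots> = sum hn ((\<lambda>m. cn - m) ` ?A)"
    by (subst sum.reindex) (auto simp: inj_on_def o_def)
  also have "\<dots> \<le> suminf hn"
    by (rule sum_le_suminf[OF hn_summable]) (auto simp: hn_nonneg)
  also have "(\<Sum>m\<in>?B. 1 / (1 + (real cn - real m)^2)) = (\<Sum>m\<in>?B. hn (m - cn))"
  proof (rule sum.cong)
    fix m assume "m \<in> ?B"
    then have "(real cn - real m)^2 = (real (m - cn))^2"
      by (simp add: of_nat_diff power2_commute)
    then show "1 / (1 + (real cn - real m)^2) = hn (m - cn)" by (simp add: hn_def)
  qed simp
  also have "\<dots> = sum hn ((\<lambda>m. m - cn) ` ?B)"
    by (subst sum.reindex) (auto simp: inj_on_def o_def)
  also have "\<dots> \<le> suminf hn"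
    by (rule sum_le_suminf[OF hn_summable]) (auto simp: hn_nonneg)
  finally show ?thesis by simp
qed

definition vv :: "nat \<Rightarrow> nat \<Rightarrow> nat \<Rightarrow> real" where
  "vv p n k = 1 / (1 + \<bar>rT p n - rT p k\<bar>)"

lemma vv_nonneg: "vv p n k \<ge> 0" by (simp add: vv_def)

lemma vv_sq_le: "(vv p n k)^2 \<le> 1 / (1 + (rT p n - rT p k)^2)"
proof -
  let ?d = "\<bar>rT p n - rT p k\<bar>"
  have "1 + (rT p n - rT p k)^2 \<le> (1 + ?d)^2"
    by (simp add: power2_eq_square algebra_simps)
  moreover have "0 < 1 + (rT p n - rT p k)^2" by (simp add: add_pos_nonneg)
  ultimately show ?thesis unfolding vv_def
    by (simp add: power_divide frac_le)
qed

lemma vv_partial: "(\<Sum>k<N. (vv p n (Suc k))^2) \<le> real p + 2 * suminf hn"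
proof -
  define cn where "cn = (if n \<le> p + 1 then 0 else n - p - 1)"
  have rn: "rT p n = real cn" by (simp add: rT_def cn_def)
  define b where "b k = (if k < p then 1 else 1 / (1 + (real cn - real (k - p))^2))" for k
  have b0: "b k \<ge> 0" for k by (simp add: b_def add_pos_nonneg)
  have fb: "(vv p n (Suc k))^2 \<le> b k" for k
  proof (cases "k < p")
    case True
    have "(vv p n (Suc k))^2 \<le> 1" unfolding vv_def by (simp add: power_le_one)
    then show ?thesis using True by (simp add: b_def)
  next
    case False
    then have "rT p (Suc k) = real (k - p)" by (simp add: rT_def)
    then show ?thesis using vv_sq_le[of p n "Suc k"] False by (simp add: b_def rn)
  qed
  have "(\<Sum>k<N. (vv p n (Suc k))^2) \<le> (\<Sum>k<N. b k)" by (intro sum_mono fb)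
  also have "\<dots> \<le> (\<Sum>k<N+p. b k)" by (rule sum_mono2) (auto simp: b0)
  also have "(\<Sum>k<N+p. b k) = (\<Sum>k\<in>{0..<p}. b k) + (\<Sum>k\<in>{p..<N+p}. b k)"
    by (simp add: atLeast0LessThan[symmetric] sum.atLeastLessThan_concat)
  also have "(\<Sum>k\<in>{0..<p}. b k) = real p" by (simp add: b_def)
  also have "(\<Sum>k\<in>{p..<N+p}. b k) = (\<Sum>m\<in>{0..<N}. b (m + p))"
    using sum.shift_bounds_nat_ivl[of b 0 p N] by simp
  also have "\<dots> = (\<Sum>m<N. 1 / (1 + (real cn - real m)^2))"
    by (simp add: b_def atLeast0LessThan)
  also have "\<dots> \<le> 2 * suminf hn" by (rule h_partial)
  finally show ?thesis by simp
qed

lemma vv_summable: "summable (\<lambda>k. (vv p n (Suc k))^2)"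
proof (rule bounded_imp_summable)
  show "(\<Sum>k\<le>N. (vv p n (Suc k))^2) \<le> real p + 2 * suminf hn" for N
    using vv_partial[where N="Suc N" and p=p and n=n] by (simp add: lessThan_Suc_atMost)
qed simp

lemma vv_suminf: "(\<Sum>k. (vv p n (Suc k))^2) \<le> real p + 2 * suminf hn"
  by (rule suminf_le_const[OF vv_summable vv_partial])

lemma amgm_sum:
  fixes u w :: "nat \<Rightarrow> real"
  assumes u0: "\<And>k. u k \<ge> 0" and w0: "\<And>k. w k \<ge> 0"
    and su: "summable (\<lambda>k. (u k)^2)" and sw: "summable (\<lambda>k. (w k)^2)"
    and U0: "U \<ge> 0" and Ub: "(\<Sum>k. (u k)^2) \<le> U^2" and Wb: "(\<Sum>k. (w k)^2) \<le> Wb"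
  shows "summable (\<lambda>k. u k * w k) \<and> (\<Sum>k. u k * w k) \<le> U * (1 + Wb) / 2"
proof -
  have le: "u k * w k \<le> ((u k)^2 + (w k)^2) / 2" for k
    using sum_squares_ge_zero[of "u k - w k" 0] by (simp add: power2_eq_square algebra_simps)
  have sm: "summable (\<lambda>k. u k * w k)"
  proof (rule summable_comparison_test)
    show "summable (\<lambda>k. ((u k)^2 + (w k)^2) / 2)" by (intro summable_divide summable_add su sw)
    show "\<exists>N. \<forall>n\<ge>N. norm (u n * w n) \<le> ((u n)^2 + (w n)^2) / 2"
      using le u0 w0 by auto
  qed
  show ?thesis
  proof (cases "U = 0")
    case True
    have "u k = 0" for k
    proof -
      have "(u k)^2 \<le> (\<Sum>k. (u k)^2)"
        using sum_le_suminf[OF su, of "{k}"] by simp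
      moreover have "U^2 = 0" using True by simp
      ultimately have "(u k)^2 \<le> 0" using Ub by linarith
      then show ?thesis by simp
    qed
    then show ?thesis using True by simp
  next
    case False
    then have Up: "U > 0" using U0 by simp
    have le2: "u k * w k \<le> ((u k)^2 / U + U * (w k)^2) / 2" for k
    proof -
      have "0 \<le> (u k - U * w k)^2" by simp
      then have "2 * U * (u k * w k) \<le> (u k)^2 + U^2 * (w k)^2"
        by (simp add: power2_eq_square algebra_simps)
      then have "u k * w k \<le> ((u k)^2 + U^2 * (w k)^2) / (2 * U)"
        using Up by (simp add: le_divide_eq mult.commute mult.left_commute)
      also have "\<dots> = ((u k)^2 / U + U * (w k)^2) / 2"
        using Up by (simp add: field_simps power2_eq_square)
      finally show ?thesis .
    qed
    have s2: "summable (\<lambda>k. ((u k)^2 / U + U * (w k)^2) / 2)"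
      by (intro summable_divide summable_add summable_mult su sw)
    have "(\<Sum>k. u k * w k) \<le> (\<Sum>k. ((u k)^2 / U + U * (w k)^2) / 2)"
      by (rule suminf_le[OF le2 sm s2])
    also have "\<dots> = ((\<Sum>k. (u k)^2) / U + U * (\<Sum>k. (w k)^2)) / 2"
    proof -
      have s1: "summable (\<lambda>k. (u k)^2 / U)" by (rule summable_divide[OF su])
      have s3: "summable (\<lambda>k. U * (w k)^2)" by (rule summable_mult[OF sw])
      have "(\<Sum>k. ((u k)^2 / U + U * (w k)^2) / 2) = (\<Sum>k. (u k)^2 / U + U * (w k)^2) / 2"
        by (rule suminf_divide[OF summable_add[OF s1 s3]])
      also have "(\<Sum>k. (u k)^2 / U + U * (w k)^2) = (\<Sum>k. (u k)^2 / U) + (\<Sum>k. U * (w k)^2)"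
        by (rule suminf_add[OF s1 s3, symmetric])
      also have "(\<Sum>k. (u k)^2 / U) = (\<Sum>k. (u k)^2) / U" by (rule suminf_divide[OF su])
      also have "(\<Sum>k. U * (w k)^2) = U * (\<Sum>k. (w k)^2)" by (rule suminf_mult[OF sw])
      finally show ?thesis .
    qed
    also have "\<dots> \<le> (U^2 / U + U * Wb) / 2"
      using Ub Wb Up by (intro divide_right_mono add_mono mult_left_mono) auto
    also have "\<dots> = U * (1 + Wb) / 2" using Up by (simp add: power2_eq_square algebra_simps)
    finally show ?thesis using sm by simp
  qed
qed

lemma cos_bound_disc:
  assumes "z \<in> cball (of_real cr) (4*r)" "0 \<le> x" "x \<le> pi" "r \<ge> 0"
  shows "cmod (cos (z * of_real x)) \<le> exp (4*r*pi)"
proof -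
  have "cmod (z - of_real cr) \<le> 4*r" using assms by (simp add: mem_cball dist_norm norm_minus_commute)
  then have iz: "\<bar>Im z\<bar> \<le> 4*r" using abs_Im_le_cmod[of "z - of_real cr"] by simp
  have "\<bar>Im (z * of_real x)\<bar> = \<bar>Im z\<bar> * x" using assms by (simp add: abs_mult)
  also have "\<dots> \<le> 4*r*pi" using assms iz by (intro mult_mono) auto
  finally show ?thesis using cmod_cos_le[of "z * of_real x"] by (meson exp_le_cancel_iff order.trans)
qed

lemma cos_holo: "(\<lambda>z. cos (z * of_real x)) holomorphic_on UNIV"
  by (intro holomorphic_intros)

lemma phi_lip:
  assumes r0: "r > 0" and x: "0 \<le> x" "x \<le> pi"
    and r1: "r1 \<in> cball (of_real cr) (2*r)" and r2: "r2 \<in> cball (of_real cr) (2*r)"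
  shows "cmod (cos (r1 * of_real x) - cos (r2 * of_real x)) \<le> exp (4*r*pi) / (2*r) * cmod (r1 - r2)"
  using F_lip[OF cos_holo r0 _ r1 r2, of x "exp (4*r*pi)"] cos_bound_disc[OF _ x] r0 by auto

lemma psi_lip:
  assumes r0: "r > 0" and x: "0 \<le> x" "x \<le> pi"
    and r1: "r1 \<in> cball (of_real cr) r" and r2: "r2 \<in> cball (of_real cr) r"
  shows "cmod (dd (\<lambda>z. cos (z * of_real x)) r1 (of_real cr) - dd (\<lambda>z. cos (z * of_real x)) r2 (of_real cr))
     \<le> exp (4*r*pi) / (2*r*r) * cmod (r1 - r2)"
  using dd_lip[OF cos_holo r0 _ r1 r2, of x "exp (4*r*pi)"] cos_bound_disc[OF _ x] r0 by auto

lemma term_le: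
  fixes f :: "nat \<Rightarrow> real"
  assumes s: "summable (\<lambda>k. (f (Suc k))^2)" and f0: "\<And>k. f k \<ge> 0"
    and U: "(\<Sum>k. (f (Suc k))^2) \<le> U^2" and U0: "U \<ge> 0" and n: "n \<ge> 1"
  shows "f n \<le> U"
proof -
  obtain m where m: "n = Suc m" using n by (cases n) auto
  have "(f (Suc m))^2 \<le> (\<Sum>k. (f (Suc k))^2)"
    using sum_le_suminf[OF s, of "{m}"] by simp
  then have "(f n)^2 \<le> U^2" using U m by simp
  then show ?thesis by (rule power2_le_imp_le[OF _ U0])
qed

lemma xi_nonneg: "xi p S n \<ge> 0" by (simp add: xi_def)
lemma delta_nonneg: "delta S1 S2 n \<ge> 0" by (simp add: delta_def)

lemma inBall_sum:
  assumes "inBall p \<Omega> S"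
  shows "summable (\<lambda>k. (xi p S (Suc k))^2)" "(\<Sum>k. (xi p S (Suc k))^2) \<le> \<Omega>^2"
proof -
  show s: "summable (\<lambda>k. (xi p S (Suc k))^2)" using assms by (simp add: inBall_def)
  have "0 \<le> (\<Sum>k. (xi p S (Suc k))^2)" by (intro suminf_nonneg s) simp
  moreover have "sqrt (\<Sum>k. (xi p S (Suc k))^2) \<le> \<Omega>" using assms by (simp add: inBall_def)
  ultimately show "(\<Sum>k. (xi p S (Suc k))^2) \<le> \<Omega>^2"
    using real_sqrt_pow2[of "\<Sum>k. (xi p S (Suc k))^2"] power_mono[of "sqrt (\<Sum>k. (xi p S (Suc k))^2)" \<Omega> 2]
    by simp
qed

lemma xi_le: "inBall p \<Omega> S \<Longrightarrow> \<Omega> > 0 \<Longrightarrow> n \<ge> 1 \<Longrightarrow> xi p S n \<le> \<Omega>"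
  by (rule term_le[OF inBall_sum(1) _ inBall_sum(2)]) (auto simp: xi_nonneg)

lemma rho_in: "inBall p \<Omega> S \<Longrightarrow> \<Omega> > 0 \<Longrightarrow> n \<ge> 1 \<Longrightarrow> rho S n \<in> cball (of_real (rT p n)) \<Omega>"
proof -
  assume a: "inBall p \<Omega> S" "\<Omega> > 0" "n \<ge> 1"
  have "cmod (rho S n - rhoT p n) \<le> xi p S n" by (simp add: xi_def)
  also have "\<dots> \<le> \<Omega>" by (rule xi_le[OF a])
  finally show ?thesis by (simp add: mem_cball dist_norm norm_minus_commute rhoT_rT)
qed

lemma alphT_le: "cmod (alphT p k) \<le> 1"
  using pi_gt3 by (auto simp: alphT_def norm_divide)

lemma alph_le: "inBall p \<Omega> S \<Longrightarrow> \<Omega> > 0 \<Longrightarrow> k \<ge> 1 \<Longrightarrow> cmod (alph S k) \<le> 1 + \<Omega>"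
proof -
  assume a: "inBall p \<Omega> S" "\<Omega> > 0" "k \<ge> 1"
  have "cmod (alph S k) \<le> cmod (alphT p k) + cmod (alph S k - alphT p k)"
    by (rule norm_triangle_sub)
  also have "cmod (alph S k - alphT p k) \<le> xi p S k" by (simp add: xi_def)
  finally show ?thesis using xi_le[OF a] alphT_le[of p k] by linarith
qed

lemma delta_le: "delta S1 S2 n \<le> xi p S1 n + xi p S2 n"
proof -
  have "cmod (rho S1 n - rho S2 n) \<le> cmod (rho S1 n - rhoT p n) + cmod (rho S2 n - rhoT p n)"
    using norm_triangle_ineq4[of "rho S1 n - rhoT p n" "rho S2 n - rhoT p n"] by simp
  moreover have "cmod (alph S1 n - alph S2 n) \<le> cmod (alph S1 n - alphT p n) + cmod (alph S2 n - alphT p n)"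
    using norm_triangle_ineq4[of "alph S1 n - alphT p n" "alph S2 n - alphT p n"] by simp
  ultimately show ?thesis by (simp add: delta_def xi_def)
qed

lemma delta_summable:
  assumes "inBall p \<Omega> S1" "inBall p \<Omega> S2"
  shows "summable (\<lambda>k. (delta S1 S2 (Suc k))^2)"
proof (rule summable_comparison_test)
  show "summable (\<lambda>k. 2 * (xi p S1 (Suc k))^2 + 2 * (xi p S2 (Suc k))^2)"
    by (intro summable_add summable_mult inBall_sum(1)[OF assms(1)] inBall_sum(1)[OF assms(2)])
  show "\<exists>N. \<forall>n\<ge>N. norm ((delta S1 S2 (Suc n))^2) \<le> 2 * (xi p S1 (Suc n))^2 + 2 * (xi p S2 (Suc n))^2"
  proof (intro exI allI impI)
    fix n :: nat
    have "(delta S1 S2 (Suc n))^2 \<le> (xi p S1 (Suc n) + xi p S2 (Suc n))^2"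
      by (intro power_mono delta_le delta_nonneg)
    also have "\<dots> \<le> 2 * (xi p S1 (Suc n))^2 + 2 * (xi p S2 (Suc n))^2"
      using sum_squares_ge_zero[of "xi p S1 (Suc n) - xi p S2 (Suc n)" 0]
      by (simp add: power2_eq_square algebra_simps)
    finally show "norm ((delta S1 S2 (Suc n))^2) \<le> 2 * (xi p S1 (Suc n))^2 + 2 * (xi p S2 (Suc n))^2"
      by simp
  qed
qed

lemma Zd_sq:
  assumes "inBall p \<Omega> S1" "inBall p \<Omega> S2"
  shows "(\<Sum>k. (delta S1 S2 (Suc k))^2) = (Zd S1 S2)^2" "Zd S1 S2 \<ge> 0"
proof -
  have "0 \<le> (\<Sum>k. (delta S1 S2 (Suc k))^2)" by (intro suminf_nonneg delta_summable[OF assms]) simp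
  then show "(\<Sum>k. (delta S1 S2 (Suc k))^2) = (Zd S1 S2)^2" by (simp add: Zd_def)
  show "Zd S1 S2 \<ge> 0" unfolding Zd_def by (rule real_sqrt_ge_zero) fact
qed

lemma delta_le_Z: "inBall p \<Omega> S1 \<Longrightarrow> inBall p \<Omega> S2 \<Longrightarrow> n \<ge> 1 \<Longrightarrow> delta S1 S2 n \<le> Zd S1 S2"
  by (rule term_le[OF delta_summable _ eq_refl[OF Zd_sq(1)] Zd_sq(2)]) (auto simp: delta_nonneg)

lemma comb:
  fixes c1 c2 C V dk X dn dN L :: real
  assumes "0 \<le> c1" "0 \<le> c2" "c1 \<le> C" "c2 \<le> C" "0 \<le> V" "0 \<le> dk" "0 \<le> X" "0 \<le> dn" "dn \<le> dN"
    and L: "L \<le> c1 * V * dk + c2 * V * (X * dn)"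
  shows "L \<le> C * V * (dk + X * dN)"
proof -
  have "c1 * V * dk \<le> C * V * dk" using assms by (intro mult_right_mono) auto
  moreover have "c2 * V * (X * dn) \<le> C * V * (X * dN)"
    using assms by (intro mult_mono mult_left_mono) auto
  moreover have "C * V * (dk + X * dN) = C * V * dk + C * V * (X * dN)" by (simp add: distrib_left)
  ultimately show ?thesis using L by linarith
qed

definition Ck0 :: "real \<Rightarrow> real" where
  "Ck0 r = ((1+r)/(2*r) + (1 + (1+r)/(2*r))/2) + (1 + (1+r)/(2*r))/(2*r)"
definition Cn0 :: "real \<Rightarrow> real" where
  "Cn0 r = (1+r)/(2*r*r) + (1 + (1+r)/(2*r))/(2*r*r)"
definition Ck1 :: "real \<Rightarrow> real" where
  "Ck1 r = ((1+r) + r * (1 + (1+r)/(2*r))) + (1 + (1+r)/(2*r))"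
definition Cm :: "real \<Rightarrow> real" where
  "Cm r = Ck0 r + Cn0 r + Ck1 r"

lemma Cs_nonneg: "r > 0 \<Longrightarrow> Ck0 r \<ge> 0 \<and> Cn0 r \<ge> 0 \<and> Ck1 r \<ge> 0"
  by (simp add: Ck0_def Cn0_def Ck1_def)

lemma row_bound:
  assumes O: "\<Omega> > 0" and S1: "inBall p \<Omega> S1" and S2: "inBall p \<Omega> S2"
    and x0: "0 \<le> x" and xpi: "x \<le> pi" and n: "n \<ge> 1" and k: "k \<ge> 1"
  shows "cmod (Hm p S1 x n k i 0 - Hm p S2 x n k i 0) + cmod (Hm p S1 x n k i 1 - Hm p S2 x n k i 1)
    \<le> Cm \<Omega> * (K0 \<Omega> * vv p n k) * (delta S1 S2 k + xi p S2 k * delta S1 S2 n)"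
proof -
  define cr where "cr = rT p n"
  define dr where "dr = rT p k"
  have cr0: "cr \<ge> 0" and dr0: "dr \<ge> 0" by (auto simp: cr_def dr_def rT_nonneg)
  have VV: "VV \<Omega> cr dr = K0 \<Omega> * vv p n k"
    using VV_def[OF x0 xpi O cr0 dr0] by (simp add: vv_def cr_def dr_def)
  have V0: "K0 \<Omega> * vv p n k \<ge> 0" using K0_nonneg[of \<Omega>] O vv_nonneg by simp
  have r1: "rho S1 n \<in> cball (of_real cr) \<Omega>" using rho_in[OF S1 O n] by (simp add: cr_def)
  have r2: "rho S2 n \<in> cball (of_real cr) \<Omega>" using rho_in[OF S2 O n] by (simp add: cr_def)
  have m1: "rho S1 k \<in> cball (of_real dr) \<Omega>" using rho_in[OF S1 O k] by (simp add: dr_def)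
  have m2: "rho S2 k \<in> cball (of_real dr) \<Omega>" using rho_in[OF S2 O k] by (simp add: dr_def)
  have a1: "cmod (alph S1 k) \<le> 1 + \<Omega>" by (rule alph_le[OF S1 O k])
  have a2: "cmod (alph S2 k) \<le> 1 + \<Omega>" by (rule alph_le[OF S2 O k])
  have aT: "cmod (alphT p k) \<le> 1 + \<Omega>" using alphT_le[of p k] O by linarith
  have X: "cmod (rho S2 k - of_real dr) + cmod (alph S2 k - alphT p k) \<le> xi p S2 k"
    by (simp add: xi_def dr_def rhoT_rT)
  have X': "cmod (rho S2 k - of_real dr) \<le> xi p S2 k" using X by (smt (verit) norm_ge_zero)
  have dn: "cmod (rho S1 n - rho S2 n) \<le> delta S1 S2 n" by (simp add: delta_def)
  have dk: "cmod (rho S1 k - rho S2 k) + cmod (alph S1 k - alph S2 k) = delta S1 S2 k" by (simp add: delta_def)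
  have Cs: "Ck0 \<Omega> \<ge> 0" "Cn0 \<Omega> \<ge> 0" "Ck1 \<Omega> \<ge> 0" using Cs_nonneg[OF O] by auto
  have H: "Hm p S x n k i j =
    (if i = 0 then (if j = 0 then (rho S k - of_real dr) * (alph S k * dd (\<lambda>z. EE x z (rho S k)) (rho S n) (of_real cr))
                    else alph S k * dd (\<lambda>z. EE x z (rho S k)) (rho S n) (of_real cr) - alphT p k * dd (\<lambda>z. EE x z (of_real dr)) (rho S n) (of_real cr))
     else (if j = 0 then (rho S k - of_real dr) * (alph S k * EE x (of_real cr) (rho S k))
           else alph S k * EE x (of_real cr) (rho S k) - alphT p k * EE x (of_real cr) (of_real dr)))" for S i j
    using Hm_eq[OF x0, of p S n k i j] by (simp add: Let_def rhoT_rT cr_def dr_def)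
  show ?thesis
  proof (cases "i = 0")
    case True
    note b00 = B00[OF x0 xpi O cr0 dr0 m1 m2 a1 a2 r1 r2 X']
    note b01 = B01[OF x0 xpi O cr0 dr0 m1 m2 a2 aT r1 r2 X, of "alph S1 k"]
    define V where "V = VV \<Omega> cr dr"
    define dK where "dK = cmod (rho S1 k - rho S2 k) + cmod (alph S1 k - alph S2 k)"
    define XD where "XD = xi p S2 k * cmod (rho S1 n - rho S2 n)"
    have eq: "Ck0 \<Omega> * V * dK + Cn0 \<Omega> * V * XD =
       (((1+\<Omega>)/(2*\<Omega>) + (1 + (1+\<Omega>)/(2*\<Omega>))/2) * V * dK + (1+\<Omega>)/(2*\<Omega>*\<Omega>) * V * XD)
     + ((1 + (1+\<Omega>)/(2*\<Omega>))/(2*\<Omega>) * V * dK + (1 + (1+\<Omega>)/(2*\<Omega>))/(2*\<Omega>*\<Omega>) * V * XD)"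
      unfolding Ck0_def Cn0_def by (simp only: distrib_right)
    have L: "cmod (Hm p S1 x n k i 0 - Hm p S2 x n k i 0) + cmod (Hm p S1 x n k i 1 - Hm p S2 x n k i 1)
       \<le> Ck0 \<Omega> * V * dK + Cn0 \<Omega> * V * XD"
      unfolding eq using b00 b01 True by (simp add: H V_def dK_def XD_def)
    show ?thesis
    proof (rule comb[OF Cs(1) Cs(2) _ _ V0 delta_nonneg xi_nonneg norm_ge_zero dn])
      show "Ck0 \<Omega> \<le> Cm \<Omega>" "Cn0 \<Omega> \<le> Cm \<Omega>" using Cs by (auto simp: Cm_def)
      show "cmod (Hm p S1 x n k i 0 - Hm p S2 x n k i 0) + cmod (Hm p S1 x n k i 1 - Hm p S2 x n k i 1)
        \<le> Ck0 \<Omega> * (K0 \<Omega> * vv p n k) * delta S1 S2 k + Cn0 \<Omega> * (K0 \<Omega> * vv p n k) * (xi p S2 k * cmod (rho S1 n - rho S2 n))"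
        using L by (simp add: V_def VV dK_def XD_def dk)
    qed
  next
    case False
    note b10 = B10[OF x0 xpi O cr0 dr0 m1 m2 a1 a2]
    note b11 = B11[OF x0 xpi O cr0 dr0 m1 m2 a2, of "alph S1 k" "alphT p k"]
    define V where "V = VV \<Omega> cr dr"
    define dK where "dK = cmod (rho S1 k - rho S2 k) + cmod (alph S1 k - alph S2 k)"
    have eq: "Ck1 \<Omega> * V * dK = ((1+\<Omega>) + \<Omega> * (1 + (1+\<Omega>)/(2*\<Omega>))) * V * dK + (1 + (1+\<Omega>)/(2*\<Omega>)) * V * dK"
      unfolding Ck1_def by (simp only: distrib_right)
    have L: "cmod (Hm p S1 x n k i 0 - Hm p S2 x n k i 0) + cmod (Hm p S1 x n k i 1 - Hm p S2 x n k i 1)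
       \<le> Ck1 \<Omega> * V * dK + 0 * V * (xi p S2 k * cmod (rho S1 n - rho S2 n))"
      unfolding eq using b10 b11 False by (simp add: H V_def dK_def)
    show ?thesis
    proof (rule comb[of "Ck1 \<Omega>" 0, OF Cs(3) order_refl _ _ V0 delta_nonneg xi_nonneg norm_ge_zero dn])
      show "Ck1 \<Omega> \<le> Cm \<Omega>" "0 \<le> Cm \<Omega>" using Cs by (auto simp: Cm_def)
      show "cmod (Hm p S1 x n k i 0 - Hm p S2 x n k i 0) + cmod (Hm p S1 x n k i 1 - Hm p S2 x n k i 1)
        \<le> Ck1 \<Omega> * (K0 \<Omega> * vv p n k) * delta S1 S2 k + 0 * (K0 \<Omega> * vv p n k) * (xi p S2 k * cmod (rho S1 n - rho S2 n))"
        using L by (simp add: V_def VV dK_def dk)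
    qed
  qed
qed

definition Wc :: "nat \<Rightarrow> real" where "Wc p = real p + 2 * suminf hn"

lemma Wc_nonneg: "Wc p \<ge> 0"
  using suminf_nonneg[OF hn_summable hn_nonneg] by (simp add: Wc_def)

definition C3 :: "nat \<Rightarrow> real \<Rightarrow> real" where
  "C3 p r = Cm r * K0 r * ((1 + Wc p) / 2 + r * (1 + Wc p) / 2)"

lemma part3:
  assumes O: "\<Omega> > 0" and S1: "inBall p \<Omega> S1" and S2: "inBall p \<Omega> S2"
    and x0: "0 \<le> x" and xpi: "x \<le> pi" and n: "n \<ge> 1"
    and aB: "\<forall>k\<ge>1. \<forall>j<2. cmod (a k j) \<le> B"
  shows "summable (\<lambda>k. \<Sum>j<2. (Hm p S1 x n (Suc k) i j - Hm p S2 x n (Suc k) i j) * a (Suc k) j) \<and>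
         cmod (\<Sum>k. \<Sum>j<2. (Hm p S1 x n (Suc k) i j - Hm p S2 x n (Suc k) i j) * a (Suc k) j)
            \<le> C3 p \<Omega> * Zd S1 S2 * B"
proof -
  define t where "t k = (\<Sum>j<2. (Hm p S1 x n (Suc k) i j - Hm p S2 x n (Suc k) i j) * a (Suc k) j)" for k
  define Z where "Z = Zd S1 S2"
  define dn where "dn = delta S1 S2 n"
  define KK where "KK = Cm \<Omega> * K0 \<Omega>"
  have "cmod (a 1 0) \<le> B" using aB by simp
  then have B0: "B \<ge> 0" using norm_ge_zero order_trans by blast
  have Z0: "Z \<ge> 0" using Zd_sq(2)[OF S1 S2] by (simp add: Z_def)
  have "Cm \<Omega> \<ge> 0" using Cs_nonneg[OF O] unfolding Cm_def by linarith
  then have KK0: "KK \<ge> 0" using K0_nonneg[of \<Omega>] O unfolding KK_def by simp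
  have dn0: "dn \<ge> 0" by (simp add: dn_def delta_nonneg)
  have dnZ: "dn \<le> Z" using delta_le_Z[OF S1 S2 n] by (simp add: dn_def Z_def)
  define g where "g k = B * KK * (delta S1 S2 (Suc k) * vv p n (Suc k) + dn * (xi p S2 (Suc k) * vv p n (Suc k)))" for k
  have tg: "norm (t k) \<le> g k" for k
  proof -
    have rb: "cmod (Hm p S1 x n (Suc k) i 0 - Hm p S2 x n (Suc k) i 0) + cmod (Hm p S1 x n (Suc k) i 1 - Hm p S2 x n (Suc k) i 1)
      \<le> Cm \<Omega> * (K0 \<Omega> * vv p n (Suc k)) * (delta S1 S2 (Suc k) + xi p S2 (Suc k) * delta S1 S2 n)"
      by (rule row_bound[OF O S1 S2 x0 xpi n]) simp
    have a0: "cmod (a (Suc k) 0) \<le> B" and a1: "cmod (a (Suc k) 1) \<le> B" using aB by auto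
    have "norm (t k) \<le> cmod (Hm p S1 x n (Suc k) i 0 - Hm p S2 x n (Suc k) i 0) * cmod (a (Suc k) 0)
         + cmod (Hm p S1 x n (Suc k) i 1 - Hm p S2 x n (Suc k) i 1) * cmod (a (Suc k) 1)"
      unfolding t_def sum2
      using norm_triangle_ineq[of "(Hm p S1 x n (Suc k) i 0 - Hm p S2 x n (Suc k) i 0) * a (Suc k) 0"
          "(Hm p S1 x n (Suc k) i 1 - Hm p S2 x n (Suc k) i 1) * a (Suc k) 1"]
      by (simp add: norm_mult)
    also have "\<dots> \<le> cmod (Hm p S1 x n (Suc k) i 0 - Hm p S2 x n (Suc k) i 0) * B
         + cmod (Hm p S1 x n (Suc k) i 1 - Hm p S2 x n (Suc k) i 1) * B"
      by (intro add_mono mult_left_mono a0 a1) auto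
    also have "\<dots> = B * (cmod (Hm p S1 x n (Suc k) i 0 - Hm p S2 x n (Suc k) i 0) + cmod (Hm p S1 x n (Suc k) i 1 - Hm p S2 x n (Suc k) i 1))"
      by (simp add: algebra_simps)
    also have "\<dots> \<le> B * (Cm \<Omega> * (K0 \<Omega> * vv p n (Suc k)) * (delta S1 S2 (Suc k) + xi p S2 (Suc k) * delta S1 S2 n))"
      by (intro mult_left_mono rb B0)
    also have "\<dots> = g k" unfolding g_def KK_def dn_def by (simp only: mult_ac distrib_left)
    finally show ?thesis .
  qed
  have Zsq: "(\<Sum>k. (delta S1 S2 (Suc k))^2) \<le> Z^2" using Zd_sq(1)[OF S1 S2] by (simp add: Z_def)
  have vsum: "(\<Sum>k. (vv p n (Suc k))^2) \<le> Wc p" using vv_suminf by (simp add: Wc_def)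
  have am1: "summable (\<lambda>k. delta S1 S2 (Suc k) * vv p n (Suc k)) \<and>
      (\<Sum>k. delta S1 S2 (Suc k) * vv p n (Suc k)) \<le> Z * (1 + Wc p) / 2"
    by (rule amgm_sum[OF delta_nonneg vv_nonneg delta_summable[OF S1 S2] vv_summable Z0 Zsq vsum])
  have am2: "summable (\<lambda>k. xi p S2 (Suc k) * vv p n (Suc k)) \<and>
      (\<Sum>k. xi p S2 (Suc k) * vv p n (Suc k)) \<le> \<Omega> * (1 + Wc p) / 2"
    by (rule amgm_sum[OF xi_nonneg vv_nonneg inBall_sum(1)[OF S2] vv_summable _ inBall_sum(2)[OF S2] vsum])
      (use O in simp)
  have s1: "summable (\<lambda>k. delta S1 S2 (Suc k) * vv p n (Suc k))" using am1 by blast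
  have s2: "summable (\<lambda>k. dn * (xi p S2 (Suc k) * vv p n (Suc k)))" using am2 by (intro summable_mult) blast
  have sg: "summable g" unfolding g_def by (intro summable_mult summable_add s1 s2)
  have gsum: "(\<Sum>k. g k) = B * KK * ((\<Sum>k. delta S1 S2 (Suc k) * vv p n (Suc k)) + dn * (\<Sum>k. xi p S2 (Suc k) * vv p n (Suc k)))"
  proof -
    have "(\<Sum>k. g k) = B * KK * (\<Sum>k. delta S1 S2 (Suc k) * vv p n (Suc k) + dn * (xi p S2 (Suc k) * vv p n (Suc k)))"
      unfolding g_def by (rule suminf_mult[OF summable_add[OF s1 s2]])
    also have "(\<Sum>k. delta S1 S2 (Suc k) * vv p n (Suc k) + dn * (xi p S2 (Suc k) * vv p n (Suc k)))
        = (\<Sum>k. delta S1 S2 (Suc k) * vv p n (Suc k)) + (\<Sum>k. dn * (xi p S2 (Suc k) * vv p n (Suc k)))"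
      by (rule suminf_add[OF s1 s2, symmetric])
    also have "(\<Sum>k. dn * (xi p S2 (Suc k) * vv p n (Suc k))) = dn * (\<Sum>k. xi p S2 (Suc k) * vv p n (Suc k))"
      using am2 by (intro suminf_mult) blast
    finally show ?thesis .
  qed
  have "(\<Sum>k. g k) \<le> B * KK * (Z * (1 + Wc p) / 2 + Z * (\<Omega> * (1 + Wc p) / 2))"
    unfolding gsum
  proof (intro mult_left_mono add_mono)
    show "(\<Sum>k. delta S1 S2 (Suc k) * vv p n (Suc k)) \<le> Z * (1 + Wc p) / 2" using am1 by blast
    have "0 \<le> (\<Sum>k. xi p S2 (Suc k) * vv p n (Suc k))"
      using am2 by (intro suminf_nonneg) (auto intro: mult_nonneg_nonneg xi_nonneg vv_nonneg)
    then show "dn * (\<Sum>k. xi p S2 (Suc k) * vv p n (Suc k)) \<le> Z * (\<Omega> * (1 + Wc p) / 2)"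
      using am2 dnZ dn0 by (intro mult_mono) auto
  qed (use B0 KK0 in auto)
  also have "\<dots> = C3 p \<Omega> * Z * B" unfolding C3_def KK_def by (simp add: algebra_simps)
  finally have gle: "(\<Sum>k. g k) \<le> C3 p \<Omega> * Z * B" .
  have st: "summable t" by (rule summable_comparison_test'[OF sg tg])
  have snt: "summable (\<lambda>k. norm (t k))" by (rule summable_comparison_test'[OF sg]) (use tg in simp)
  have "norm (\<Sum>k. t k) \<le> (\<Sum>k. norm (t k))" by (rule summable_norm[OF snt])
  also have "\<dots> \<le> (\<Sum>k. g k)" by (rule suminf_le[OF tg snt sg])
  finally have "norm (\<Sum>k. t k) \<le> C3 p \<Omega> * Z * B" using gle by linarith
  then show ?thesis using st unfolding t_def Z_def by simp
qed

theorem lemma4p1: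
  fixes p :: nat and \<Omega> :: real
  assumes "\<Omega> > 0"
  shows "\<exists>C>0. \<forall>S1 S2. inBall p \<Omega> S1 \<and> inBall p \<Omega> S2 \<longrightarrow>
    (\<forall>x\<in>{0..pi}.
      (\<forall>n\<ge>1. cmod (phiT p S1 n 0 x - phiT p S2 n 0 x) \<le> C * delta S1 S2 n
             \<and> cmod (psiT p S1 n 0 x - psiT p S2 n 0 x) \<le> C * delta S1 S2 n) \<and>
      (\<forall>(a :: nat \<Rightarrow> nat \<Rightarrow> complex) B. (\<forall>k\<ge>1. \<forall>j<2. cmod (a k j) \<le> B) \<longrightarrow>
         (\<forall>n\<ge>1. \<forall>i<2.
            summable (\<lambda>k. \<Sum>j<2. (Hm p S1 x n (Suc k) i j - Hm p S2 x n (Suc k) i j) * a (Suc k) j) \<and>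
            cmod (\<Sum>k. \<Sum>j<2. (Hm p S1 x n (Suc k) i j - Hm p S2 x n (Suc k) i j) * a (Suc k) j)
              \<le> C * Zd S1 S2 * B)))"
proof -
  have O: "\<Omega> > 0" by fact
  define C1 where "C1 = exp (4*\<Omega>*pi) / (2*\<Omega>)"
  define C2 where "C2 = exp (4*\<Omega>*pi) / (2*\<Omega>*\<Omega>)"
  define C where "C = C1 + C2 + C3 p \<Omega> + 1"
  have C10: "C1 \<ge> 0" using O by (simp add: C1_def)
  have C20: "C2 \<ge> 0" using O by (simp add: C2_def)
  have "Cm \<Omega> \<ge> 0" using Cs_nonneg[OF O] unfolding Cm_def by linarith
  then have C30: "C3 p \<Omega> \<ge> 0" unfolding C3_def
    using K0_nonneg[of \<Omega>] O Wc_nonneg[of p] by (intro mult_nonneg_nonneg) auto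
  have C1C: "C1 \<le> C" and C2C: "C2 \<le> C" and C3C: "C3 p \<Omega> \<le> C"
    using C10 C20 C30 by (auto simp: C_def)
  have Cpos: "C > 0" using C10 C20 C30 by (simp add: C_def)
  show ?thesis
  proof (rule exI[of _ C], rule conjI[OF Cpos], intro allI impI ballI)
    fix S1 S2 x
    assume S: "inBall p \<Omega> S1 \<and> inBall p \<Omega> S2" and xin: "x \<in> {0..pi}"
    then have S1: "inBall p \<Omega> S1" and S2: "inBall p \<Omega> S2" by auto
    have x0: "0 \<le> x" and xpi: "x \<le> pi" using xin by auto
    {
      fix n :: nat assume n: "n \<ge> 1"
      have r1: "rho S1 n \<in> cball (of_real (rT p n)) \<Omega>" by (rule rho_in[OF S1 O n])
      have r2: "rho S2 n \<in> cball (of_real (rT p n)) \<Omega>" by (rule rho_in[OF S2 O n])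
      have r1': "rho S1 n \<in> cball (of_real (rT p n)) (2*\<Omega>)" using r1 O by (auto simp: mem_cball)
      have r2': "rho S2 n \<in> cball (of_real (rT p n)) (2*\<Omega>)" using r2 O by (auto simp: mem_cball)
      have dn: "cmod (rho S1 n - rho S2 n) \<le> delta S1 S2 n" by (simp add: delta_def)
      have "cmod (phiT p S1 n 0 x - phiT p S2 n 0 x) \<le> C1 * cmod (rho S1 n - rho S2 n)"
        using phi_lip[OF O x0 xpi r1' r2'] by (simp add: phiT_def rho_i_def C1_def)
      also have "\<dots> \<le> C * delta S1 S2 n" using C1C C10 dn by (intro mult_mono) auto
      finally have P1: "cmod (phiT p S1 n 0 x - phiT p S2 n 0 x) \<le> C * delta S1 S2 n" .
      have "cmod (psiT p S1 n 0 x - psiT p S2 n 0 x) \<le> C2 * cmod (rho S1 n - rho S2 n)"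
        using psi_lip[OF O x0 xpi r1 r2] by (simp add: psiT_eq rhoT_rT C2_def)
      also have "\<dots> \<le> C * delta S1 S2 n" using C2C C20 dn by (intro mult_mono) auto
      finally have P2: "cmod (psiT p S1 n 0 x - psiT p S2 n 0 x) \<le> C * delta S1 S2 n" .
      note P1 P2
    }
    then have PP: "\<forall>n\<ge>1. cmod (phiT p S1 n 0 x - phiT p S2 n 0 x) \<le> C * delta S1 S2 n
             \<and> cmod (psiT p S1 n 0 x - psiT p S2 n 0 x) \<le> C * delta S1 S2 n" by blast
    {
      fix a :: "nat \<Rightarrow> nat \<Rightarrow> complex" and B
      assume aB: "\<forall>k\<ge>1. \<forall>j<2. cmod (a k j) \<le> B"
    {
      fix n i :: nat assume n: "n \<ge> 1"
      note pt = part3[OF O S1 S2 x0 xpi n aB, of i]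
      have "cmod (a 1 0) \<le> B" using aB by simp
      then have B0: "B \<ge> 0" using norm_ge_zero order_trans by blast
      have "C3 p \<Omega> * Zd S1 S2 * B \<le> C * Zd S1 S2 * B"
        using C3C B0 Zd_sq(2)[OF S1 S2] by (intro mult_right_mono) auto
      then have "summable (\<lambda>k. \<Sum>j<2. (Hm p S1 x n (Suc k) i j - Hm p S2 x n (Suc k) i j) * a (Suc k) j) \<and>
            cmod (\<Sum>k. \<Sum>j<2. (Hm p S1 x n (Suc k) i j - Hm p S2 x n (Suc k) i j) * a (Suc k) j)
              \<le> C * Zd S1 S2 * B" using pt by linarith
    }
    then have "\<forall>n\<ge>1. \<forall>i<2.
            summable (\<lambda>k. \<Sum>j<2. (Hm p S1 x n (Suc k) i j - Hm p S2 x n (Suc k) i j) * a (Suc k) j) \<and>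
            cmod (\<Sum>k. \<Sum>j<2. (Hm p S1 x n (Suc k) i j - Hm p S2 x n (Suc k) i j) * a (Suc k) j)
              \<le> C * Zd S1 S2 * B" by blast
    }
    then show "(\<forall>n\<ge>1. cmod (phiT p S1 n 0 x - phiT p S2 n 0 x) \<le> C * delta S1 S2 n
             \<and> cmod (psiT p S1 n 0 x - psiT p S2 n 0 x) \<le> C * delta S1 S2 n) \<and>
      (\<forall>(a :: nat \<Rightarrow> nat \<Rightarrow> complex) B. (\<forall>k\<ge>1. \<forall>j<2. cmod (a k j) \<le> B) \<longrightarrow>
         (\<forall>n\<ge>1. \<forall>i<2.
            summable (\<lambda>k. \<Sum>j<2. (Hm p S1 x n (Suc k) i j - Hm p S2 x n (Suc k) i j) * a (Suc k) j) \<and>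
            cmod (\<Sum>k. \<Sum>j<2. (Hm p S1 x n (Suc k) i j - Hm p S2 x n (Suc k) i j) * a (Suc k) j)
              \<le> C * Zd S1 S2 * B))" using PP by blast
  qed
qed

end
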